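(* Let $k$ be a field, let $V_\bullet$ be a complex of finite dimensional $k$-vector spaces, indexed cohomologically (differential $d_i:V_i\to V_{i+1}$, $i\in\mathbb{Z}$), and let $\phi_\bullet:V_\bullet\to V_\bullet$ be a chain map. For each $i$ let $\phi_i^H:H^i(V_\bullet)\to H^i(V_\bullet)$ be the induced map on cohomology. Then the following are equivalent: (a) $\phi_\bullet$ is chain homotopic to a commutator in the endomorphism ring of the complex $V_\bullet$ (i.e. to a chain map of the form $\alpha_\bullet\beta_\bullet-\beta_\bullet\alpha_\bullet$ with $\alpha_\bullet,\beta_\bullet$ chain endomorphisms of $V_\bullet$); (b) $\operatorname{tr}(\phi_i^H)=0$ for every index $i\in\mathbb{Z}$.
   Context: $\operatorname{tr}$ denotes the trace of an endomorphism of a finite dimensional vector space. $H^i(V_\bullet)=\ker d_i/\operatorname{im} d_{i-1}$. *)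

theory Defs
  imports Complex_Main
begin

text \<open>Finite dimensional k-vector spaces V_i (i in Z) are modelled as finite dimensional
  subspaces of one ambient k-vector space (scalar multiplication scale); a linear map
  V_i to V_j is a function on the ambient type that is linear on V_i and maps V_i into V_j.
  Only its values on V_i matter.\<close>

definition lin_on :: "('k::field \<Rightarrow> 'v::ab_group_add \<Rightarrow> 'v) \<Rightarrow> 'v set \<Rightarrow> 'v set \<Rightarrow> ('v \<Rightarrow> 'v) \<Rightarrow> bool" where
  "lin_on scale S T f \<longleftrightarrow> (\<forall>x\<in>S. f x \<in> T) \<and> (\<forall>x\<in>S. \<forall>y\<in>S. f (x + y) = f x + f y)
     \<and> (\<forall>c. \<forall>x\<in>S. f (scale c x) = scale c (f x))"

definition is_complex :: "('k::field \<Rightarrow> 'v::ab_group_add \<Rightarrow> 'v) \<Rightarrow> (int \<Rightarrow> 'v set) \<Rightarrow> (int \<Rightarrow> 'v \<Rightarrow> 'v) \<Rightarrow> bool" where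
  "is_complex scale V d \<longleftrightarrow>
     (\<forall>i. \<exists>B. finite B \<and> module.span scale B = V i) \<and>
     (\<forall>i. lin_on scale (V i) (V (i + 1)) (d i)) \<and>
     (\<forall>i. \<forall>x\<in>V i. d (i + 1) (d i x) = 0)"

definition chain_map :: "('k::field \<Rightarrow> 'v::ab_group_add \<Rightarrow> 'v) \<Rightarrow> (int \<Rightarrow> 'v set) \<Rightarrow> (int \<Rightarrow> 'v \<Rightarrow> 'v) \<Rightarrow> (int \<Rightarrow> 'v \<Rightarrow> 'v) \<Rightarrow> bool" where
  "chain_map scale V d f \<longleftrightarrow>
     (\<forall>i. lin_on scale (V i) (V i) (f i)) \<and> (\<forall>i. \<forall>x\<in>V i. d i (f i x) = f (i + 1) (d i x))"

definition chain_homotopic :: "('k::field \<Rightarrow> 'v::ab_group_add \<Rightarrow> 'v) \<Rightarrow> (int \<Rightarrow> 'v set) \<Rightarrow> (int \<Rightarrow> 'v \<Rightarrow> 'v) \<Rightarrow> (int \<Rightarrow> 'v \<Rightarrow> 'v) \<Rightarrow> (int \<Rightarrow> 'v \<Rightarrow> 'v) \<Rightarrow> bool" where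
  "chain_homotopic scale V d f g \<longleftrightarrow>
     (\<exists>h. (\<forall>i. lin_on scale (V i) (V (i - 1)) (h i)) \<and>
          (\<forall>i. \<forall>x\<in>V i. f i x - g i x = d (i - 1) (h i x) + h (i + 1) (d i x)))"

definition cocycles :: "(int \<Rightarrow> 'v set) \<Rightarrow> (int \<Rightarrow> 'v \<Rightarrow> 'v::ab_group_add) \<Rightarrow> int \<Rightarrow> 'v set" where
  "cocycles V d i = {x \<in> V i. d i x = 0}"

definition coboundaries :: "(int \<Rightarrow> 'v set) \<Rightarrow> (int \<Rightarrow> 'v \<Rightarrow> 'v::ab_group_add) \<Rightarrow> int \<Rightarrow> 'v set" where
  "coboundaries V d i = d (i - 1) ` V (i - 1)"

text \<open>Trace of the map induced by f on the quotient W/U (U a subspace of W, both f-invariant):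
  choose a basis BU of U and extend it to a basis B of W; the classes of the vectors in B - BU
  form a basis of W/U, and the diagonal matrix entry of the induced map at the class of b is the
  b-coordinate of f b with respect to B.\<close>
definition quot_trace :: "('k::field \<Rightarrow> 'v::ab_group_add \<Rightarrow> 'v) \<Rightarrow> 'v set \<Rightarrow> 'v set \<Rightarrow> ('v \<Rightarrow> 'v) \<Rightarrow> 'k" where
  "quot_trace scale W U f =
    (let BU = (SOME BU. \<not> module.dependent scale BU \<and> module.span scale BU = U);
         B = (SOME B. BU \<subseteq> B \<and> \<not> module.dependent scale B \<and> module.span scale B = W)
     in \<Sum>b\<in>B - BU. module.representation scale B (f b) b)"

definition cohom_trace :: "('k::field \<Rightarrow> 'v::ab_group_add \<Rightarrow> 'v) \<Rightarrow> (int \<Rightarrow> 'v set) \<Rightarrow> (int \<Rightarrow> 'v \<Rightarrow> 'v) \<Rightarrow> (int \<Rightarrow> 'v \<Rightarrow> 'v) \<Rightarrow> int \<Rightarrow> 'k" where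
  "cohom_trace scale V d f i = quot_trace scale (cocycles V d i) (coboundaries V d i) (f i)"

end

theory Submission
  imports Defs
begin

locale VS = vector_space scale + P: vector_space_pair scale scale
  for scale :: "'k::field \<Rightarrow> 'v::ab_group_add \<Rightarrow> 'v"
begin

abbreviation lin where "lin g \<equiv> Vector_Spaces.linear scale scale g"

lemma lin_onD:
  assumes "lin_on scale S T f"
  shows "x \<in> S \<Longrightarrow> f x \<in> T" "x\<in>S \<Longrightarrow> y\<in>S \<Longrightarrow> f (x+y) = f x + f y"
    "x\<in>S \<Longrightarrow> f (scale c x) = scale c (f x)"
  using assms unfolding lin_on_def by auto

lemma lin_on_zero: assumes "lin_on scale S T f" "subspace S" shows "f 0 = 0"
proof -
  have "0 \<in> S" using assms(2) subspace_0 by blast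
  then have "f (0+0) = f 0 + f 0" using lin_onD(2)[OF assms(1)] by blast
  then show ?thesis by simp
qed

lemma lin_on_neg: assumes "lin_on scale S T f" "subspace S" "x \<in> S" shows "f (- x) = - f x"
proof -
  have "-x \<in> S" using assms subspace_neg by blast
  then have "f (x + -x) = f x + f (-x)" using lin_onD(2)[OF assms(1)] assms by blast
  then have "f x + f (-x) = 0" using lin_on_zero[OF assms(1,2)] by simp
  then show ?thesis by (metis add.commute eq_neg_iff_add_eq_0)
qed

lemma lin_on_diff: assumes "lin_on scale S T f" "subspace S" "x \<in> S" "y \<in> S"
  shows "f (x - y) = f x - f y"
proof -
  have "-y \<in> S" using assms subspace_neg by blast
  then have "f (x + -y) = f x + f (-y)" using lin_onD(2)[OF assms(1)] assms by blast
  then show ?thesis using lin_on_neg[OF assms(1,2,4)] by simp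
qed

lemma lin_on_sum: assumes "lin_on scale S T f" "subspace S" "\<And>i. i\<in>I \<Longrightarrow> x i \<in> S"
  shows "f (sum x I) = (\<Sum>i\<in>I. f (x i))"
  using assms(3)
proof (induction I rule: infinite_finite_induct)
  case (infinite A) then show ?case using lin_on_zero[OF assms(1,2)] by simp
next
  case empty then show ?case using lin_on_zero[OF assms(1,2)] by simp
next
  case (insert a A)
  have sA: "sum x A \<in> S" by (rule subspace_sum[OF assms(2)]) (use insert.prems in auto)
  have "f (sum x (insert a A)) = f (x a + sum x A)" using insert.hyps by simp
  also have "\<dots> = f (x a) + f (sum x A)"
    by (rule lin_onD(2)[OF assms(1)]) (use insert.prems sA in auto)
  also have "\<dots> = (\<Sum>i\<in>insert a A. f (x i))" using insert by simp
  finally show ?case .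
qed

lemma lin_on_lincomb: assumes "lin_on scale S T f" "subspace S" "\<And>i. i\<in>I \<Longrightarrow> x i \<in> S"
  shows "f (\<Sum>i\<in>I. scale (c i) (x i)) = (\<Sum>i\<in>I. scale (c i) (f (x i)))"
proof -
  have "f (\<Sum>i\<in>I. scale (c i) (x i)) = (\<Sum>i\<in>I. f (scale (c i) (x i)))"
    by (rule lin_on_sum[OF assms(1,2)]) (use assms(2,3) subspace_scale in blast)
  also have "\<dots> = (\<Sum>i\<in>I. scale (c i) (f (x i)))"
    using lin_onD(3)[OF assms(1)] assms(3) by simp
  finally show ?thesis .
qed

lemma lin_imp_lin_on: "lin g \<Longrightarrow> (\<And>x. x\<in>S \<Longrightarrow> g x \<in> T) \<Longrightarrow> lin_on scale S T g"
  unfolding lin_on_def using P.linear_add P.linear_scale by blast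

lemma lin_on_comp: "lin_on scale S T f \<Longrightarrow> lin_on scale T R g \<Longrightarrow> lin_on scale S R (\<lambda>x. g (f x))"
  unfolding lin_on_def by auto

lemma lin_on_mono: "lin_on scale S T f \<Longrightarrow> S' \<subseteq> S \<Longrightarrow> T \<subseteq> T' \<Longrightarrow> lin_on scale S' T' f"
  unfolding lin_on_def by blast

lemma lin_on_cong: "lin_on scale S T f \<Longrightarrow> (\<And>x. x \<in> S \<Longrightarrow> f x = g x) \<Longrightarrow> subspace S \<Longrightarrow> lin_on scale S T g"
  unfolding lin_on_def using subspace_add subspace_scale by (smt (verit))

lemma lin_on_add: assumes "lin_on scale S T f" "lin_on scale S T g" "subspace T"
  shows "lin_on scale S T (\<lambda>x. f x + g x)"
  using assms unfolding lin_on_def by (auto simp: subspace_add scale_right_distrib)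

lemma lin_on_sub: assumes "lin_on scale S T f" "lin_on scale S T g" "subspace T"
  shows "lin_on scale S T (\<lambda>x. f x - g x)"
  using assms unfolding lin_on_def by (auto simp: subspace_diff scale_right_diff_distrib)

definition trc :: "'v set \<Rightarrow> ('v \<Rightarrow> 'v) \<Rightarrow> 'k" where
  "trc E f = (\<Sum>e\<in>E. representation E (f e) e)"

lemma rep_lin:
  assumes "independent E" "finite E" "independent E'" "x \<in> span E"
    "lin_on scale (span E) (span E') g"
  shows "representation E' (g x) e = (\<Sum>c\<in>E. representation E x c * representation E' (g c) e)"
proof -
  have x: "x = (\<Sum>c\<in>E. scale (representation E x c) c)"
    using sum_representation_eq[OF assms(1,4,2)] by simp
  have "g x = (\<Sum>c\<in>E. scale (representation E x c) (g c))"
    by (subst x, rule lin_on_lincomb[OF assms(5)]) (auto intro: span_base)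
  then have "representation E' (g x) e = (\<Sum>c\<in>E. representation E' (scale (representation E x c) (g c)) e)"
    using representation_sum[OF assms(3), where v="\<lambda>c. scale (representation E x c) (g c)" and I=E]
      lin_onD(1)[OF assms(5)] span_scale span_base by (simp add: span_base span_scale)
  also have "\<dots> = (\<Sum>c\<in>E. representation E x c * representation E' (g c) e)"
    using representation_scale[OF assms(3)] lin_onD(1)[OF assms(5)] span_base by (auto intro!: sum.cong)
  finally show ?thesis .
qed

lemma trc_inv:
  assumes "finite E" "independent E" "finite E'" "independent E'" "span E = span E'"
    "lin_on scale (span E) (span E) f"
  shows "trc E f = trc E' f"
proof -
  have idl: "lin_on scale (span E') (span E) (\<lambda>x. x)" using assms(5) unfolding lin_on_def by auto
  have f': "lin_on scale (span E) (span E') f" using assms(5,6) by simp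
  have 1: "representation E (f e) e = (\<Sum>c\<in>E'. representation E' (f e) c * representation E c e)"
    if "e \<in> E" for e
  proof -
    have "f e \<in> span E'" using lin_onD(1)[OF assms(6)] assms(5) span_base that by metis
    from rep_lin[OF assms(4,3,2) this idl, of e] show ?thesis by simp
  qed
  have 2: "representation E' (f c) c = (\<Sum>e\<in>E. representation E c e * representation E' (f e) c)"
    if "c \<in> E'" for c
  proof -
    have "c \<in> span E" using assms(5) span_base that by metis
    from rep_lin[OF assms(2,1,4) this f', of c] show ?thesis by simp
  qed
  have "trc E f = (\<Sum>e\<in>E. \<Sum>c\<in>E'. representation E' (f e) c * representation E c e)"
    unfolding trc_def using 1 by (rule sum.cong[OF refl])
  also have "\<dots> = (\<Sum>c\<in>E'. \<Sum>e\<in>E. representation E c e * representation E' (f e) c)"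
    by (subst sum.swap) (simp add: mult.commute)
  also have "\<dots> = trc E' f"
    unfolding trc_def using 2 by (intro sum.cong[OF refl]) simp
  finally show ?thesis .
qed

lemma trc_cyc:
  assumes "finite E" "independent E"
    "lin_on scale (span E) (span E) a" "lin_on scale (span E) (span E) b"
  shows "trc E (\<lambda>x. a (b x)) = trc E (\<lambda>x. b (a x))"
proof -
  have 1: "representation E (a (b e)) e = (\<Sum>c\<in>E. representation E (b e) c * representation E (a c) e)"
    if "e \<in> E" for e
  proof -
    have "b e \<in> span E" using lin_onD(1)[OF assms(4)] span_base that by metis
    from rep_lin[OF assms(2,1,2) this assms(3), of e] show ?thesis .
  qed
  have 2: "representation E (b (a e)) e = (\<Sum>c\<in>E. representation E (a e) c * representation E (b c) e)"
    if "e \<in> E" for e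
  proof -
    have "a e \<in> span E" using lin_onD(1)[OF assms(3)] span_base that by metis
    from rep_lin[OF assms(2,1,2) this assms(4), of e] show ?thesis .
  qed
  have "trc E (\<lambda>x. a (b x)) = (\<Sum>e\<in>E. \<Sum>c\<in>E. representation E (b e) c * representation E (a c) e)"
    unfolding trc_def using 1 by (intro sum.cong[OF refl]) simp
  also have "\<dots> = (\<Sum>e\<in>E. \<Sum>c\<in>E. representation E (a e) c * representation E (b c) e)"
    by (subst sum.swap) (simp add: mult.commute)
  also have "\<dots> = trc E (\<lambda>x. b (a x))"
    unfolding trc_def using 2 by (intro sum.cong[OF refl]) simp
  finally show ?thesis .
qed

lemma trc_diff:
  assumes "independent E" "\<And>e. e\<in>E \<Longrightarrow> f e \<in> span E" "\<And>e. e\<in>E \<Longrightarrow> g e \<in> span E"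
  shows "trc E (\<lambda>x. f x - g x) = trc E f - trc E g"
  unfolding trc_def using representation_diff[OF assms(1)] assms(2,3)
  by (simp add: sum_subtractf)

lemma trc_cong: "(\<And>e. e\<in>E \<Longrightarrow> f e = g e) \<Longrightarrow> trc E f = trc E g"
  unfolding trc_def by simp

end

lemma VS_I: "vector_space s \<Longrightarrow> VS s" unfolding VS_def vector_space_pair_def by auto

locale SH = VS scale for scale :: "'k::field \<Rightarrow> 'v::ab_group_add \<Rightarrow> 'v" +
  fixes E :: "'v set" and f :: "'v \<Rightarrow> 'v"
  assumes finE: "finite E" and indE: "independent E"
    and flin: "lin_on scale (span E) (span E) f"
begin

definition chainok :: "'v list \<Rightarrow> 'v list \<Rightarrow> bool" where
  "chainok us ws \<longleftrightarrow> distinct (us @ ws) \<and> independent (set us \<union> set ws) \<and>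
     set us \<union> set ws \<subseteq> span E \<and>
     (\<forall>k<length us. (Suc k < length us \<and> f (us!k) = us!Suc k) \<or> f (us!k) \<in> set ws) \<and>
     (\<forall>k<length ws. f (ws!k) \<in> span (set us \<union> set (take (Suc k) ws)))"

lemma fin: "v \<in> span E \<Longrightarrow> f v \<in> span E" using lin_onD(1)[OF flin] .

lemma fiter: "v \<in> span E \<Longrightarrow> (f^^i) v \<in> span E"
  by (induction i) (auto simp: fin)

lemma card_bound: "independent S \<Longrightarrow> S \<subseteq> span E \<Longrightarrow> finite S \<and> card S \<le> card E"
  using independent_span_bound[OF finE] by blast

lemma chain_step:
  assumes ok: "chainok us ws" and ne: "span (set us \<union> set ws) \<noteq> span E"
  shows "\<exists>us' ws'. chainok us' ws' \<and> length (us' @ ws') > length (us @ ws)"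
proof -
  let ?Z = "set us \<union> set ws"
  have Zsub: "?Z \<subseteq> span E" and indZ: "independent ?Z" and dist: "distinct (us @ ws)"
    using ok unfolding chainok_def by auto
  have "span ?Z \<subseteq> span E" using Zsub span_mono span_span by (metis)
  with ne obtain v where v: "v \<in> span E" "v \<notin> span ?Z" by blast
  define G where "G j = ?Z \<union> (\<lambda>i. (f^^i) v) ` {..<j}" for j
  define Q where "Q j \<longleftrightarrow> (f^^j) v \<in> span (G j)" for j
  have GSuc: "G (Suc j) = insert ((f^^j) v) (G j)" for j
    unfolding G_def by (auto simp: lessThan_Suc)
  have Gsub: "G j \<subseteq> span E" for j
    unfolding G_def using Zsub fiter[OF v(1)] by auto
  have Gfin: "finite (G j)" for j unfolding G_def by simp
  have indG: "independent (G j) \<and> card (G j) = card ?Z + j" if "\<forall>i<j. \<not> Q i" for j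
    using that
  proof (induction j)
    case 0 then show ?case using indZ unfolding G_def by simp
  next
    case (Suc j)
    then have IH: "independent (G j)" "card (G j) = card ?Z + j" by auto
    have nq: "(f^^j) v \<notin> span (G j)" using Suc.prems unfolding Q_def by auto
    then have nm: "(f^^j) v \<notin> G j" using span_base by blast
    show ?case unfolding GSuc using independent_insertI[OF nq IH(1)] IH(2) nm Gfin by simp
  qed
  have exQ: "\<exists>j. Q j"
  proof (rule ccontr)
    assume "\<not> (\<exists>j. Q j)"
    then have "independent (G (Suc (card E))) \<and> card (G (Suc (card E))) = card ?Z + Suc (card E)"
      using indG by blast
    with card_bound[OF _ Gsub] show False by force
  qed
  define d where "d = (LEAST j. Q j)"
  have Qd: "Q d" unfolding d_def using exQ by (rule LeastI_ex)
  have nQ: "\<not> Q i" if "i < d" for i using not_less_Least[of i Q] that unfolding d_def by blast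
  have "\<not> Q 0" unfolding Q_def G_def using v(2) by simp
  with Qd have "d \<noteq> 0" by metis
  then obtain e where de: "d = Suc e" by (cases d) auto
  define nu where "nu = map (\<lambda>i. (f^^i) v) [0..<e]"
  define us' where "us' = us @ nu"
  define ws' where "ws' = ws @ [(f^^e) v]"
  have setnew: "set us' \<union> set ws' = G d"
    unfolding us'_def ws'_def nu_def G_def de by (auto simp: lessThan_Suc)
  have indd: "independent (G d)" using indG nQ by blast
  have nm: "(f^^i) v \<notin> G i" if "i < d" for i using nQ[OF that] span_base unfolding Q_def by blast
  have Gmono: "G i \<subseteq> G j" if "i \<le> j" for i j using that unfolding G_def by auto
  have newdist: "(f^^i) v \<noteq> (f^^j) v" if "i < j" "j < d" for i j
  proof
    assume "(f^^i) v = (f^^j) v"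
    moreover have "(f^^i) v \<in> G j" unfolding G_def using that by auto
    ultimately show False using nm[OF that(2)] by simp
  qed
  have newZ: "(f^^i) v \<notin> ?Z" if "i < d" for i using nm[OF that] unfolding G_def by auto
  have inj: "inj_on (\<lambda>i. (f^^i) v) {..<d}"
    unfolding inj_on_def using newdist by (metis lessThan_iff linorder_neqE_nat)
  have dnu: "distinct nu" unfolding nu_def distinct_map using inj de
    by (auto intro: inj_on_subset)
  have dist': "distinct (us' @ ws')"
  proof -
    have "set nu \<inter> ?Z = {}" using newZ unfolding nu_def de by auto
    moreover have "(f^^e) v \<notin> ?Z" using newZ de by auto
    moreover have "(f^^e) v \<notin> set nu"
    proof
      assume "(f^^e) v \<in> set nu"
      then obtain x where "x<e" "(f^^e) v = (f^^x) v" unfolding nu_def by auto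
      with newdist[of x e] de show False by simp
    qed
    ultimately show ?thesis using dist dnu unfolding us'_def ws'_def by auto
  qed
  have C1: "\<forall>k<length us'. (Suc k < length us' \<and> f (us'!k) = us'!Suc k) \<or> f (us'!k) \<in> set ws'"
  proof (intro allI impI)
    fix k assume k: "k < length us'"
    show "(Suc k < length us' \<and> f (us'!k) = us'!Suc k) \<or> f (us'!k) \<in> set ws'"
    proof (cases "k < length us")
      case True
      then have "(Suc k < length us \<and> f (us!k) = us!Suc k) \<or> f (us!k) \<in> set ws"
        using ok unfolding chainok_def by blast
      then show ?thesis using True unfolding us'_def ws'_def by (auto simp: nth_append)
    next
      case False
      then obtain i where i: "k = length us + i" "i < e"
        using k unfolding us'_def nu_def by (metis add_diff_inverse_nat diff_zero length_append length_map length_upt nat_add_left_cancel_less)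
      have uk: "us'!k = (f^^i) v" unfolding us'_def nu_def i by (simp add: nth_append i)
      have fk: "f (us'!k) = (f^^Suc i) v" unfolding uk by simp
      show ?thesis
      proof (cases "Suc i < e")
        case True
        then have "us'!Suc k = (f^^Suc i) v" unfolding us'_def nu_def i by (simp add: nth_append)
        moreover have "Suc k < length us'" using True unfolding us'_def nu_def i by simp
        ultimately show ?thesis using fk by simp
      next
        case False
        then have "Suc i = e" using i by simp
        then show ?thesis using fk unfolding ws'_def by simp
      qed
    qed
  qed
  have C2: "\<forall>k<length ws'. f (ws'!k) \<in> span (set us' \<union> set (take (Suc k) ws'))"
  proof (intro allI impI)
    fix k assume k: "k < length ws'"
    show "f (ws'!k) \<in> span (set us' \<union> set (take (Suc k) ws'))"
    proof (cases "k < length ws")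
      case True
      then have "f (ws!k) \<in> span (set us \<union> set (take (Suc k) ws))"
        using ok unfolding chainok_def by blast
      moreover have "set us \<union> set (take (Suc k) ws) \<subseteq> set us' \<union> set (take (Suc k) ws')"
        using True unfolding us'_def ws'_def by auto
      moreover have "take (Suc k) ws' = take (Suc k) ws" using True unfolding ws'_def by simp
      moreover have "ws'!k = ws!k" using True unfolding ws'_def by (simp add: nth_append)
      ultimately show ?thesis using span_mono by (metis subsetD)
    next
      case False
      then have kk: "k = length ws" using k unfolding ws'_def by simp
      have "ws'!k = (f^^e) v" unfolding kk ws'_def by simp
      then have "f (ws'!k) = (f^^d) v" using de by simp
      moreover have "set us' \<union> set (take (Suc k) ws') = G d"
        using setnew kk unfolding ws'_def by simp
      ultimately show ?thesis using Qd unfolding Q_def by simp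
    qed
  qed
  have "chainok us' ws'"
    unfolding chainok_def using dist' indd setnew Gsub C1 C2 by simp
  moreover have "length (us' @ ws') > length (us @ ws)" unfolding us'_def ws'_def by simp
  ultimately show ?thesis by blast
qed

lemma chain_exists: "\<exists>us ws. chainok us ws \<and> span (set us \<union> set ws) = span E"
proof -
  have "\<forall>us ws. chainok us ws \<longrightarrow> card E - length (us @ ws) = n \<longrightarrow>
     (\<exists>us ws. chainok us ws \<and> span (set us \<union> set ws) = span E)" for n
  proof (induction n rule: less_induct)
    case (less n)
    show ?case
    proof (intro allI impI)
      fix us ws assume ok: "chainok us ws" and n: "card E - length (us @ ws) = n"
      show "\<exists>us ws. chainok us ws \<and> span (set us \<union> set ws) = span E"
      proof (cases "span (set us \<union> set ws) = span E")
        case True then show ?thesis using ok by blast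
      next
        case False
        from chain_step[OF ok False] obtain us' ws' where ok': "chainok us' ws'"
          and lt: "length (us' @ ws') > length (us @ ws)" by blast
        have "card (set (us' @ ws')) \<le> card E" using card_bound ok' unfolding chainok_def by simp
        moreover have "card (set (us' @ ws')) = length (us' @ ws')"
          using ok' unfolding chainok_def by (metis distinct_card)
        ultimately have "card E - length (us' @ ws') < n" using lt n by linarith
        then show ?thesis using less.IH ok' by blast
      qed
    qed
  qed
  moreover have "chainok [] []" unfolding chainok_def by (simp add: independent_empty)
  ultimately show ?thesis by blast
qed

end

fun nxt :: "'a::zero list \<Rightarrow> 'a \<Rightarrow> 'a" where
  "nxt (a # b # xs) x = (if x = a then b else nxt (b # xs) x)"
| "nxt _ x = 0"

lemma nxt_nth: "distinct xs \<Longrightarrow> Suc k < length xs \<Longrightarrow> nxt xs (xs!k) = xs!Suc k"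
proof (induction k arbitrary: xs)
  case 0
  obtain a ys' where x1: "xs = a # ys'" using 0(2) by (cases xs) auto
  obtain b ys where "ys' = b # ys" using 0(2) x1 by (cases ys') auto
  then show ?case using x1 by simp
next
  case (Suc k)
  obtain a ys' where x1: "xs = a # ys'" using Suc(3) by (cases xs) auto
  obtain b ys where x2: "ys' = b # ys" using Suc(3) x1 by (cases ys') auto
  have xs: "xs = a # b # ys" using x1 x2 by simp
  have d: "distinct (b # ys)" using Suc.prems xs by simp
  have "k < length (b # ys)" using Suc.prems xs by simp
  then have "(b # ys) ! k \<in> set (b # ys)" by (rule nth_mem)
  then have ne: "(b # ys) ! k \<noteq> a" using Suc.prems xs by auto
  have "nxt xs (xs ! Suc k) = nxt (b # ys) ((b # ys) ! k)" using xs ne by simp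
  also have "\<dots> = (b # ys) ! Suc k" using Suc.IH[OF d] Suc.prems xs by simp
  finally show ?case using xs by simp
qed

lemma nxt_last0: "distinct xs \<Longrightarrow> xs \<noteq> [] \<Longrightarrow> x = last xs \<Longrightarrow> nxt xs x = 0"
proof (induction xs x rule: nxt.induct)
  case (1 a b xs x)
  have "last (b # xs) \<noteq> a" using 1(2) by (metis distinct.simps(2) last_in_set list.discI)
  then show ?case using 1 by simp
qed auto

lemma nxt_last: "distinct xs \<Longrightarrow> xs \<noteq> [] \<Longrightarrow> nxt xs (xs!(length xs - 1)) = 0"
  using nxt_last0 last_conv_nth by metis

lemma nxt_notin: "x \<notin> set xs \<Longrightarrow> nxt xs x = 0"
  by (induction xs x rule: nxt.induct) auto

lemma nxt_in: "nxt xs x \<in> insert 0 (set (drop 1 xs))"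
  by (induction xs x rule: nxt.induct) auto

definition idx :: "'a list \<Rightarrow> 'a \<Rightarrow> nat" where
  "idx xs b = (SOME j. j < length xs \<and> xs!j = b)"

lemma idx_nth: "distinct xs \<Longrightarrow> j < length xs \<Longrightarrow> idx xs (xs!j) = j"
  unfolding idx_def by (rule some_equality) (auto simp: nth_eq_iff_index_eq)

lemma set_drop_nth: "set (drop j xs) = {xs!i | i. j \<le> i \<and> i < length xs}"
proof safe
  fix x assume "x \<in> set (drop j xs)"
  then obtain i where "i < length (drop j xs)" "drop j xs ! i = x" by (auto simp: in_set_conv_nth)
  then show "\<exists>i. x = xs ! i \<and> j \<le> i \<and> i < length xs" by (intro exI[of _ "j+i"]) auto
next
  fix i assume "j \<le> i" "i < length xs"
  then have "drop j xs ! (i - j) = xs ! i" "i - j < length (drop j xs)" by auto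
  then show "xs ! i \<in> set (drop j xs)" by (metis nth_mem)
qed

context VS begin

lemma eq_on_span:
  assumes "finite S" "independent S" "lin_on scale (span S) T g1" "lin_on scale (span S) T' g2"
    "\<And>b. b\<in>S \<Longrightarrow> g1 b = g2 b" "x \<in> span S"
  shows "g1 x = g2 x"
proof -
  have x: "x = (\<Sum>b\<in>S. scale (representation S x b) b)"
    using sum_representation_eq[OF assms(2,6,1)] by simp
  have "g1 x = (\<Sum>b\<in>S. scale (representation S x b) (g1 b))"
    by (subst x, rule lin_on_lincomb[OF assms(3)]) (auto intro: span_base)
  also have "\<dots> = (\<Sum>b\<in>S. scale (representation S x b) (g2 b))" using assms(5) by simp
  also have "\<dots> = g2 x"
    by (subst (2) x, rule lin_on_lincomb[OF assms(4), symmetric]) (auto intro: span_base)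
  finally show ?thesis .
qed

lemma lin_comp: "lin f \<Longrightarrow> lin g \<Longrightarrow> lin (\<lambda>x. g (f x))"
  using Vector_Spaces.linear_compose[of scale scale f scale g] by (simp add: o_def)
lemma lin_sub: "lin f \<Longrightarrow> lin g \<Longrightarrow> lin (\<lambda>x. f x - g x)"
  by (rule P.linear_compose_sub)
lemma lin_add: "lin f \<Longrightarrow> lin g \<Longrightarrow> lin (\<lambda>x. f x + g x)"
  by (rule P.linear_compose_add)
lemma lin_id: "lin (\<lambda>x. x)"
  by (rule linear_ident)
lemma lin_scalec: "lin f \<Longrightarrow> lin (\<lambda>x. scale c (f x))"
  by (rule P.linear_compose_scale_right)

lemma lin_on_UNIV: "lin g \<Longrightarrow> lin_on scale S UNIV g" using lin_imp_lin_on by blast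

lemma span_drop_shift:
  assumes lN: "lin N" and Nk: "\<And>k. Suc k < length fs \<Longrightarrow> N (fs!k) = fs!Suc k"
    and Nl: "fs \<noteq> [] \<Longrightarrow> N (fs!(length fs - 1)) = 0"
    and x: "x \<in> span (set (drop j fs))"
  shows "N x \<in> span (set (drop (Suc j) fs))"
proof -
  have "N ` set (drop j fs) \<subseteq> insert 0 (set (drop (Suc j) fs))"
  proof
    fix y assume "y \<in> N ` set (drop j fs)"
    then obtain i where i: "j \<le> i" "i < length fs" "y = N (fs!i)" unfolding set_drop_nth by auto
    show "y \<in> insert 0 (set (drop (Suc j) fs))"
    proof (cases "Suc i < length fs")
      case True then show ?thesis using i Nk unfolding set_drop_nth by auto
    next
      case False then have ii: "i = length fs - 1" using i by simp
      have "fs \<noteq> []" using i by auto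
      then show ?thesis using Nl ii i by auto
    qed
  qed
  then have "span (N ` set (drop j fs)) \<subseteq> span (set (drop (Suc j) fs))"
    by (metis span_insert_0 span_mono)
  moreover have "N x \<in> span (N ` set (drop j fs))" using P.linear_span_image[OF lN] x by blast
  ultimately show ?thesis by blast
qed

lemma lemL:
  assumes dist: "distinct fs" and ind: "independent (set fs)" and lN: "lin N"
    and Nk: "\<And>k. Suc k < length fs \<Longrightarrow> N (fs!k) = fs!Suc k"
    and Nl: "fs \<noteq> [] \<Longrightarrow> N (fs!(length fs - 1)) = 0"
    and lB: "lin_on scale (span (set fs)) (span (set fs)) B"
    and Bk: "\<And>k. k < length fs \<Longrightarrow> B (fs!k) - scale (c k) (fs!k) \<in> span (set (drop (Suc k) fs))"
    and tr: "(\<Sum>k<length fs. c k) = 0"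
  shows "\<exists>Y. lin Y \<and> (\<forall>x\<in>span (set fs). Y x \<in> span (set fs)) \<and>
     (\<forall>x\<in>span (set fs). N (Y x) - Y (N x) = B x)"
proof -
  define n where "n = length fs"
  define F where "F = set fs"
  define yv where "yv = rec_nat 0 (\<lambda>j y. N y - B (fs!j))"
  have yv0: "yv 0 = 0" and yvS: "yv (Suc j) = N (yv j) - B (fs!j)" for j unfolding yv_def by simp_all
  have N0: "N 0 = 0" using P.linear_0[OF lN] .
  have inv: "yv (Suc j) + scale (\<Sum>l\<le>j. c l) (fs!j) \<in> span (set (drop (Suc j) fs))" if "j < n" for j
    using that
  proof (induction j)
    case 0
    have "yv (Suc 0) + scale (\<Sum>l\<le>0. c l) (fs!0) = - (B (fs!0) - scale (c 0) (fs!0))"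
      using yvS[of 0] yv0 N0 by simp
    then show ?case using Bk[of 0] 0 span_neg unfolding n_def by metis
  next
    case (Suc j)
    define s where "s = yv (Suc j) + scale (\<Sum>l\<le>j. c l) (fs!j)"
    have s: "s \<in> span (set (drop (Suc j) fs))" using Suc unfolding s_def by simp
    have Ns: "N s \<in> span (set (drop (Suc (Suc j)) fs))"
      by (rule span_drop_shift[OF lN Nk Nl s])
    have Nfs: "N (fs!j) = fs!Suc j" using Nk Suc.prems unfolding n_def by simp
    have Ns2: "N s = N (yv (Suc j)) + scale (\<Sum>l\<le>j. c l) (fs!Suc j)"
      unfolding s_def using P.linear_add[OF lN] P.linear_scale[OF lN] Nfs by simp
    define t where "t = B (fs!Suc j) - scale (c (Suc j)) (fs!Suc j)"
    have t: "t \<in> span (set (drop (Suc (Suc j)) fs))" using Bk Suc.prems unfolding t_def n_def by simp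
    have "yv (Suc (Suc j)) + scale (\<Sum>l\<le>Suc j. c l) (fs!Suc j) = N s - t"
      unfolding yvS[of "Suc j"] Ns2 t_def by (simp add: scale_left_distrib algebra_simps)
    then show ?case using span_diff[OF Ns t] by simp
  qed
  have yvn: "yv n = 0"
  proof (cases "n = 0")
    case True then show ?thesis using yv0 by simp
  next
    case False
    then obtain m where m: "n = Suc m" by (cases n) auto
    have "yv n + scale (\<Sum>l\<le>m. c l) (fs!m) \<in> span (set (drop n fs))" using inv[of m] m by simp
    moreover have "(\<Sum>l\<le>m. c l) = 0" using tr m unfolding n_def by (simp add: lessThan_Suc_atMost)
    ultimately show ?thesis unfolding n_def by simp
  qed
  have Nspan: "N x \<in> span F" if "x \<in> span F" for x
    using span_drop_shift[OF lN Nk Nl, of x 0] that unfolding F_def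
    by (metis drop_0 set_drop_subset span_mono subsetD)
  have yvin: "yv j \<in> span F" if "j \<le> n" for j
    using that
  proof (induction j)
    case 0 then show ?case using yv0 span_zero by simp
  next
    case (Suc j)
    have "B (fs!j) \<in> span F" using Suc.prems lB unfolding n_def F_def
      by (metis Suc_le_lessD lin_onD(1) nth_mem span_base)
    then show ?case using yvS Nspan[OF Suc.IH] Suc.prems span_diff by simp
  qed
  define Y where "Y = P.construct F (\<lambda>b. yv (idx fs b))"
  have indF: "independent F" using ind unfolding F_def .
  have lY: "lin Y" unfolding Y_def using P.linear_construct[OF indF] .
  have Yk: "Y (fs!k) = yv k" if "k < n" for k
    unfolding Y_def using P.construct_basis[OF indF] that idx_nth[OF dist] unfolding F_def n_def by simp
  have Yin: "Y x \<in> span F" for x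
  proof -
    have "Y x \<in> span ((\<lambda>b. yv (idx fs b)) ` F)" unfolding Y_def by (rule P.construct_in_span[OF indF])
    moreover have "span ((\<lambda>b. yv (idx fs b)) ` F) \<subseteq> span F"
    proof (rule span_minimal[OF _ subspace_span], rule image_subsetI)
      fix b assume "b \<in> F"
      then obtain k where "k < n" "b = fs!k" unfolding F_def n_def by (auto simp: in_set_conv_nth)
      then show "yv (idx fs b) \<in> span F" using idx_nth[OF dist] yvin unfolding n_def by simp
    qed
    ultimately show ?thesis by blast
  qed
  have basis: "N (Y b) - Y (N b) = B b" if "b \<in> F" for b
  proof -
    from that have "b \<in> set fs" unfolding F_def .
    then obtain k where k: "k < n" "b = fs!k" unfolding n_def by (auto simp: in_set_conv_nth)
    show ?thesis
    proof (cases "Suc k < n")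
      case True
      then have "Y (N b) = yv (Suc k)" using k Nk Yk unfolding n_def by simp
      then show ?thesis using k Yk yvS by simp
    next
      case False
      then have kk: "k = n - 1" "fs \<noteq> []" using k unfolding n_def by auto
      then have "Y (N b) = 0" using k Nl P.linear_0[OF lY] unfolding n_def by simp
      moreover have "yv (Suc k) = 0" using yvn kk k by simp
      ultimately show ?thesis using k Yk yvS[of k] by (simp add: algebra_simps)
    qed
  qed
  have g1: "lin_on scale (span F) UNIV (\<lambda>x. N (Y x) - Y (N x))"
    by (rule lin_on_UNIV) (rule lin_sub[OF lin_comp[OF lY lN] lin_comp[OF lN lY]])
  have finF: "finite F" unfolding F_def by simp
  have lB': "lin_on scale (span F) (span F) B" using lB unfolding F_def .
  have "N (Y x) - Y (N x) = B x" if "x \<in> span F" for x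
    by (rule eq_on_span[OF finF indF g1 lB' basis that])
  then have eq: "\<forall>x\<in>span (set fs). N (Y x) - Y (N x) = B x" unfolding F_def by blast
  have Yin': "\<forall>x\<in>span (set fs). Y x \<in> span (set fs)" using Yin unfolding F_def by blast
  show ?thesis by (rule exI[of _ Y]) (intro conjI lY Yin' eq)
qed

end

lemma idx_lt: "b \<in> set xs \<Longrightarrow> idx xs b < length xs"
  unfolding idx_def by (rule someI2_ex) (auto simp: in_set_conv_nth)
context VS begin

lemma construct_list:
  assumes dist: "distinct fs" and ind: "independent (set fs)" and k: "k < length fs"
  shows "P.construct (set fs) (\<lambda>b. g (idx fs b)) (fs!k) = g k"
  using P.construct_basis[OF ind] idx_nth[OF dist k] k by simp

lemma construct_list_in:
  assumes ind: "independent (set fs)" and sub: "\<And>k. k < length fs \<Longrightarrow> g k \<in> U" and U: "subspace U"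
  shows "P.construct (set fs) (\<lambda>b. g (idx fs b)) x \<in> U"
proof -
  have "P.construct (set fs) (\<lambda>b. g (idx fs b)) x \<in> span ((\<lambda>b. g (idx fs b)) ` set fs)"
    using P.construct_in_span[OF ind, of "\<lambda>b. g (idx fs b)" x] .
  moreover have "span ((\<lambda>b. g (idx fs b)) ` set fs) \<subseteq> U"
  proof (rule span_minimal[OF _ U], rule image_subsetI)
    fix b assume "b \<in> set fs"
    then show "g (idx fs b) \<in> U" by (rule sub[OF idx_lt])
  qed
  ultimately show ?thesis by blast
qed

lemma lemS:
  assumes dist: "distinct fs" and ind: "independent (set fs)" and lN: "lin N"
    and Nk: "\<And>k. Suc k < length fs \<Longrightarrow> N (fs!k) = fs!Suc k"
    and Nl: "fs \<noteq> [] \<Longrightarrow> N (fs!(length fs - 1)) = 0"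
    and lT: "lin T" and RU: "\<And>y. y \<in> U \<Longrightarrow> R y \<in> U" and TR: "\<And>y. y \<in> U \<Longrightarrow> T (R y) = y"
    and sU: "subspace U"
    and lC: "lin_on scale (span (set fs)) U C"
  shows "\<exists>Z. lin Z \<and> (\<forall>x\<in>span (set fs). Z x \<in> U) \<and> (\<forall>x\<in>span (set fs). T (Z x) - Z (scale d (N x)) = C x)"
proof -
  define n where "n = length fs"
  define zz where "zz = rec_nat 0 (\<lambda>j z. R (C (fs!(n - Suc j)) + scale d z))"
  have zz0: "zz 0 = 0" and zzS: "zz (Suc j) = R (C (fs!(n - Suc j)) + scale d (zz j))" for j
    unfolding zz_def by simp_all
  define zv where "zv k = zz (n - k)" for k
  have zvn: "zv n = 0" unfolding zv_def using zz0 by simp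
  have zvk: "zv k = R (C (fs!k) + scale d (zv (Suc k)))" if "k < n" for k
  proof -
    have e: "n - k = Suc (n - Suc k)" "n - Suc (n - Suc k) = k" using that by auto
    show ?thesis unfolding zv_def e(1) zzS e(2) ..
  qed
  have zzin: "zz j \<in> U" if "j \<le> n" for j
    using that
  proof (induction j)
    case 0 then show ?case using zz0 subspace_0[OF sU] by simp
  next
    case (Suc j)
    have "C (fs!(n - Suc j)) \<in> U" using lC Suc.prems unfolding n_def
      by (metis diff_less lin_onD(1) nth_mem span_base zero_less_Suc less_le_trans)
    then show ?case using zzS Suc RU subspace_add[OF sU] subspace_scale[OF sU] by simp
  qed
  have zvin: "zv k \<in> U" for k unfolding zv_def using zzin by simp
  define Z where "Z = P.construct (set fs) (\<lambda>b. zv (idx fs b))"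
  have lZ: "lin Z" unfolding Z_def using P.linear_construct[OF ind] .
  have Zk: "Z (fs!k) = zv k" if "k < n" for k
    unfolding Z_def using construct_list[OF dist ind] that unfolding n_def by simp
  have Zin: "Z x \<in> U" for x unfolding Z_def by (rule construct_list_in[OF ind _ sU]) (rule zvin)
  have basis: "T (Z b) - Z (scale d (N b)) = C b" if bin: "b \<in> set fs" for b
  proof -
    obtain k where k: "k < n" "b = fs!k" using bin unfolding n_def by (auto simp: in_set_conv_nth)
    have ZN: "Z (N b) = zv (Suc k)"
    proof (cases "Suc k < n")
      case True then show ?thesis using k Nk Zk unfolding n_def by simp
    next
      case False
      then have kk: "k = n - 1" "fs \<noteq> []" "Suc k = n" using k unfolding n_def by auto
      then show ?thesis using k Nl P.linear_0[OF lZ] zvn unfolding n_def by simp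
    qed
    have "C (fs!k) + scale d (zv (Suc k)) \<in> U" using lC k zvin unfolding n_def
      by (metis lin_onD(1) nth_mem span_base subspace_add[OF sU] subspace_scale[OF sU])
    then have "T (Z b) = C b + scale d (zv (Suc k))" using k Zk zvk TR by simp
    moreover have "Z (scale d (N b)) = scale d (zv (Suc k))" using ZN P.linear_scale[OF lZ] by simp
    ultimately show ?thesis by simp
  qed
  have g1: "lin_on scale (span (set fs)) UNIV (\<lambda>x. T (Z x) - Z (scale d (N x)))"
    by (rule lin_on_UNIV) (rule lin_sub[OF lin_comp[OF lZ lT] lin_comp[OF lin_scalec[OF lN] lZ]])
  have eq: "T (Z x) - Z (scale d (N x)) = C x" if "x \<in> span (set fs)" for x
    by (rule eq_on_span[OF _ ind g1 lC basis that]) simp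
  show ?thesis by (rule exI[of _ Z]) (use lZ Zin eq in blast)
qed

lemma lemInv:
  assumes dist: "distinct gs" and ind: "independent (set gs)" and lM: "lin M"
    and Mk: "\<And>k. Suc k < length gs \<Longrightarrow> M (gs!k) = gs!Suc k"
    and Ml: "gs \<noteq> [] \<Longrightarrow> M (gs!(length gs - 1)) = 0"
  shows "\<exists>R. (\<forall>y\<in>span (set gs). R y \<in> span (set gs)) \<and>
     (\<forall>y\<in>span (set gs). R y + scale c (M (R y)) = y)"
proof -
  define n where "n = length gs"
  define rr where "rr = rec_nat 0 (\<lambda>j r. gs!(n - Suc j) - scale c r)"
  have rr0: "rr 0 = 0" and rrS: "rr (Suc j) = gs!(n - Suc j) - scale c (rr j)" for j
    unfolding rr_def by simp_all
  define rv where "rv k = rr (n - k)" for k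
  have rvn: "rv n = 0" unfolding rv_def using rr0 by simp
  have rvk: "rv k = gs!k - scale c (rv (Suc k))" if "k < n" for k
  proof -
    have e: "n - k = Suc (n - Suc k)" "n - Suc (n - Suc k) = k" using that by auto
    show ?thesis unfolding rv_def e(1) rrS e(2) ..
  qed
  have rrin: "rr j \<in> span (set gs)" if "j \<le> n" for j
    using that
  proof (induction j)
    case 0 then show ?case using rr0 span_zero by simp
  next
    case (Suc j)
    have "gs!(n - Suc j) \<in> span (set gs)" using Suc.prems unfolding n_def
      by (intro span_base nth_mem) simp
    then show ?case using rrS Suc span_diff span_scale by simp
  qed
  have rvin: "rv k \<in> span (set gs)" for k unfolding rv_def using rrin by simp
  have key: "rv k + scale c (M (rv k)) = gs!k" if "k < n" for k
    using that
  proof (induction "n - k" arbitrary: k)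
    case 0 then show ?case by simp
  next
    case (Suc m)
    have rk: "rv k = gs!k - scale c (rv (Suc k))" using rvk Suc.prems .
    have Mrk: "M (rv k) = M (gs!k) - scale c (M (rv (Suc k)))"
      unfolding rk using P.linear_diff[OF lM] P.linear_scale[OF lM] by simp
    have "rv k + scale c (M (rv k)) = (gs!k - scale c (rv (Suc k))) + scale c (M (gs!k) - scale c (M (rv (Suc k))))"
      using Mrk rk by metis
    also have "\<dots> = gs!k + scale c (M (gs!k)) - scale c (rv (Suc k) + scale c (M (rv (Suc k))))"
      by (simp add: scale_right_diff_distrib scale_right_distrib algebra_simps)
    finally have "rv k + scale c (M (rv k)) =
        gs!k + scale c (M (gs!k)) - scale c (rv (Suc k) + scale c (M (rv (Suc k))))" .
    moreover have "scale c (M (gs!k)) = scale c (rv (Suc k) + scale c (M (rv (Suc k))))"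
    proof (cases "Suc k < n")
      case True
      then have "rv (Suc k) + scale c (M (rv (Suc k))) = gs!Suc k" using Suc by simp
      then show ?thesis using Mk True unfolding n_def by simp
    next
      case False
      then have kk: "Suc k = n" "gs \<noteq> []" "k = length gs - 1" using Suc.prems unfolding n_def by auto
      then have m0: "M (gs!k) = 0" using Ml by simp
      have "rv (Suc k) = 0" using kk(1) rvn by simp
      then have "rv (Suc k) + scale c (M (rv (Suc k))) = 0" using P.linear_0[OF lM] by simp
      then show ?thesis using m0 by simp
    qed
    ultimately show ?case by simp
  qed
  define R where "R = P.construct (set gs) (\<lambda>b. rv (idx gs b))"
  have lR: "lin R" unfolding R_def using P.linear_construct[OF ind] .
  have Rk: "R (gs!k) = rv k" if "k < n" for k
    unfolding R_def using construct_list[OF dist ind] that unfolding n_def by simp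
  have Rin: "R x \<in> span (set gs)" for x unfolding R_def
    by (rule construct_list_in[OF ind _ subspace_span]) (rule rvin)
  have g1: "lin_on scale (span (set gs)) UNIV (\<lambda>y. R y + scale c (M (R y)))"
    by (rule lin_on_UNIV) (rule lin_add[OF lR lin_scalec[OF lin_comp[OF lR lM]]])
  have g2: "lin_on scale (span (set gs)) UNIV (\<lambda>y. y)"
    by (rule lin_on_UNIV) (rule lin_id)
  have basis: "R b + scale c (M (R b)) = b" if bin: "b \<in> set gs" for b
  proof -
    obtain k where k: "k < n" "b = gs!k" using bin unfolding n_def by (auto simp: in_set_conv_nth)
    then show ?thesis using Rk key by simp
  qed
  have eq: "R y + scale c (M (R y)) = y" if "y \<in> span (set gs)" for y
    by (rule eq_on_span[OF _ ind g1 g2 basis that]) simp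
  show ?thesis by (rule exI[of _ R]) (use Rin eq in blast)
qed

end

lemma sum_nth_set: "distinct xs \<Longrightarrow> (\<Sum>k<length xs. g (xs!k)) = (\<Sum>b\<in>set xs. g b)"
proof -
  assume d: "distinct xs"
  have "set xs = (\<lambda>k. xs!k) ` {..<length xs}" by (auto simp: in_set_conv_nth)
  moreover have "inj_on (\<lambda>k. xs!k) {..<length xs}" using inj_on_nth[OF d] by simp
  ultimately show ?thesis by (simp add: sum.reindex)
qed

context VS begin

lemma drop_decomp:
  assumes dist: "distinct fs" and ind: "independent (set fs)" and k: "k < length fs"
    and y: "y \<in> span (set (drop k fs))"
  shows "y - scale (representation (set fs) y (fs!k)) (fs!k) \<in> span (set (drop (Suc k) fs))"
proof -
  define a where "a = fs!k"
  define S where "S = set (drop (Suc k) fs)"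
  have ins: "set (drop k fs) = insert a S"
    unfolding a_def S_def using Cons_nth_drop_Suc[OF k] by (metis list.simps(15))
  obtain t where t: "y - scale t a \<in> span S" using y unfolding ins span_breakdown_eq by blast
  have Ssub: "S \<subseteq> set fs" unfolding S_def by (rule set_drop_subset)
  have aS: "a \<notin> S"
  proof -
    have "distinct (drop k fs)" using dist by simp
    then show ?thesis using Cons_nth_drop_Suc[OF k] unfolding a_def S_def by (metis distinct.simps(2))
  qed
  have afs: "a \<in> set fs" unfolding a_def using k by simp
  define s where "s = y - scale t a"
  have s: "s \<in> span S" using t unfolding s_def .
  have s': "s \<in> span (set fs)" using s span_mono[OF Ssub] by blast
  have a': "a \<in> span (set fs)" using afs span_base by blast
  have ys: "y = scale t a + s" unfolding s_def by simp
  have "representation (set fs) s = representation S s"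
    by (rule representation_extend[OF ind s Ssub])
  then have rs: "representation (set fs) s a = 0" using representation_ne_zero aS by metis
  have "representation (set fs) y a = t * representation (set fs) a a + representation (set fs) s a"
    unfolding ys using representation_add[OF ind s' span_scale[OF a']] representation_scale[OF ind a']
    by simp
  then have "representation (set fs) y a = t" using rs representation_basis[OF ind afs] by simp
  then show ?thesis using t unfolding a_def S_def by simp
qed

lemma lin_zero: "lin (\<lambda>x. 0)" by (rule P.linear_zero)

end

context SH begin

lemma shoda:
  assumes tr0: "trc E f = 0"
  shows "\<exists>a b. lin a \<and> lin b \<and> (\<forall>x\<in>span E. a x \<in> span E) \<and> (\<forall>x\<in>span E. b x \<in> span E) \<and>
    (\<forall>x\<in>span E. f x = a (b x) - b (a x))"
proof -
  obtain us ws where ok: "chainok us ws" and spn: "span (set us \<union> set ws) = span E"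
    using chain_exists by blast
  define BB where "BB = set us \<union> set ws"
  define H where "H = span E"
  have distu: "distinct us" and distw: "distinct ws" and disj: "set us \<inter> set ws = {}"
    and indBB: "independent BB" and C1: "\<forall>k<length us. (Suc k < length us \<and> f (us!k) = us!Suc k) \<or> f (us!k) \<in> set ws"
    and C2: "\<forall>k<length ws. f (ws!k) \<in> span (set us \<union> set (take (Suc k) ws))"
    using ok unfolding chainok_def BB_def by auto
  have HBB: "H = span BB" unfolding H_def BB_def spn ..
  have finBB: "finite BB" unfolding BB_def by simp
  have indu: "independent (set us)" using indBB unfolding BB_def by (metis dependent_mono sup_ge1)
  have indw: "independent (set ws)" using indBB unfolding BB_def by (metis dependent_mono sup_ge2)
  have distrw: "distinct (rev ws)" using distw by simp
  have indrw: "independent (set (rev ws))" using indw by simp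
  define U1 where "U1 = span (set us)"
  define U2 where "U2 = span (set ws)"
  have U1H: "U1 \<subseteq> H" unfolding U1_def HBB BB_def by (rule span_mono) simp
  have U2H: "U2 \<subseteq> H" unfolding U2_def HBB BB_def by (rule span_mono) simp
  have sU1: "subspace U1" and sU2: "subspace U2" and sH: "subspace H"
    unfolding U1_def U2_def H_def by simp_all
  define P1 where "P1 = P.construct BB (\<lambda>b. if b \<in> set us then b else 0)"
  define P2 where "P2 = P.construct BB (\<lambda>b. if b \<in> set ws then b else 0)"
  define N1 where "N1 = P.construct BB (nxt us)"
  define N2 where "N2 = P.construct BB (nxt (rev ws))"
  have lP1: "lin P1" unfolding P1_def by (rule P.linear_construct[OF indBB])
  have lP2: "lin P2" unfolding P2_def by (rule P.linear_construct[OF indBB])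
  have lN1: "lin N1" unfolding N1_def by (rule P.linear_construct[OF indBB])
  have lN2: "lin N2" unfolding N2_def by (rule P.linear_construct[OF indBB])
  have P1b: "P1 b = (if b \<in> set us then b else 0)" if "b \<in> BB" for b
    unfolding P1_def using P.construct_basis[OF indBB that] .
  have P2b: "P2 b = (if b \<in> set ws then b else 0)" if "b \<in> BB" for b
    unfolding P2_def using P.construct_basis[OF indBB that] .
  have N1b: "N1 b = nxt us b" if "b \<in> BB" for b
    unfolding N1_def using P.construct_basis[OF indBB that] .
  have N2b: "N2 b = nxt (rev ws) b" if "b \<in> BB" for b
    unfolding N2_def using P.construct_basis[OF indBB that] .
  have P1in: "P1 x \<in> U1" for x
  proof -
    have "P1 x \<in> span ((\<lambda>b. if b \<in> set us then b else 0) ` BB)"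
      unfolding P1_def by (rule P.construct_in_span[OF indBB])
    moreover have "span ((\<lambda>b. if b \<in> set us then b else 0) ` BB) \<subseteq> U1"
      unfolding U1_def by (rule span_minimal) (auto simp: span_base span_zero)
    ultimately show ?thesis by blast
  qed
  have P2in: "P2 x \<in> U2" for x
  proof -
    have "P2 x \<in> span ((\<lambda>b. if b \<in> set ws then b else 0) ` BB)"
      unfolding P2_def by (rule P.construct_in_span[OF indBB])
    moreover have "span ((\<lambda>b. if b \<in> set ws then b else 0) ` BB) \<subseteq> U2"
      unfolding U2_def by (rule span_minimal) (auto simp: span_base span_zero)
    ultimately show ?thesis by blast
  qed
  have N1in: "N1 x \<in> U1" for x
  proof -
    have "N1 x \<in> span (nxt us ` BB)"
      unfolding N1_def by (rule P.construct_in_span[OF indBB])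
    moreover have "span (nxt us ` BB) \<subseteq> U1"
    proof (rule span_minimal[OF _ sU1], rule image_subsetI)
      fix b show "nxt us b \<in> U1" using nxt_in[of us b] set_drop_subset[of 1 us]
        unfolding U1_def by (auto simp: span_base span_zero)
    qed
    ultimately show ?thesis by blast
  qed
  have N2in: "N2 x \<in> U2" for x
  proof -
    have "N2 x \<in> span (nxt (rev ws) ` BB)"
      unfolding N2_def by (rule P.construct_in_span[OF indBB])
    moreover have "span (nxt (rev ws) ` BB) \<subseteq> U2"
    proof (rule span_minimal[OF _ sU2], rule image_subsetI)
      fix b show "nxt (rev ws) b \<in> U2" using nxt_in[of "rev ws" b] set_drop_subset[of 1 "rev ws"]
        unfolding U2_def by (auto simp: span_base span_zero)
    qed
    ultimately show ?thesis by blast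
  qed
  have linH: "lin_on scale H UNIV g" if "lin g" for g using lin_on_UNIV[OF that] .
  have P12: "P1 x + P2 x = x" if "x \<in> H" for x
  proof -
    have "lin_on scale (span BB) UNIV (\<lambda>x. P1 x + P2 x)" by (rule lin_on_UNIV[OF lin_add[OF lP1 lP2]])
    moreover have "lin_on scale (span BB) UNIV (\<lambda>x. x)" by (rule lin_on_UNIV[OF lin_id])
    moreover have "P1 b + P2 b = b" if "b \<in> BB" for b
      using P1b[OF that] P2b[OF that] that disj unfolding BB_def by auto
    ultimately show ?thesis using eq_on_span[OF finBB indBB] that HBB by blast
  qed
  have usBB: "b \<in> BB \<and> b \<notin> set ws" if "b \<in> set us" for b using that disj unfolding BB_def by auto
  have wsBB: "b \<in> BB \<and> b \<notin> set us" if "b \<in> set ws" for b using that disj unfolding BB_def by auto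
  have onU1: "P1 x = x \<and> P2 x = 0 \<and> N2 x = 0" if xin: "x \<in> U1" for x
  proof -
    have sub: "set us \<subseteq> BB" unfolding BB_def by simp
    have fin: "finite (set us)" by simp
    have xs: "x \<in> span (set us)" using xin unfolding U1_def .
    have "P1 x = x"
      by (rule eq_on_span[OF fin indu lin_on_UNIV[OF lP1] lin_on_UNIV[OF lin_id] _ xs])
        (simp add: P1b usBB)
    moreover have "P2 x = 0"
      by (rule eq_on_span[OF fin indu lin_on_UNIV[OF lP2] lin_on_UNIV[OF lin_zero] _ xs])
        (simp add: P2b usBB)
    moreover have "N2 x = 0"
      by (rule eq_on_span[OF fin indu lin_on_UNIV[OF lN2] lin_on_UNIV[OF lin_zero] _ xs])
        (simp add: N2b usBB nxt_notin)
    ultimately show ?thesis by blast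
  qed
  have onU2: "P2 x = x \<and> P1 x = 0 \<and> N1 x = 0" if xin: "x \<in> U2" for x
  proof -
    have sub: "set ws \<subseteq> BB" unfolding BB_def by simp
    have fin: "finite (set ws)" by simp
    have xs: "x \<in> span (set ws)" using xin unfolding U2_def .
    have "P2 x = x"
      by (rule eq_on_span[OF fin indw lin_on_UNIV[OF lP2] lin_on_UNIV[OF lin_id] _ xs])
        (simp add: P2b wsBB)
    moreover have "P1 x = 0"
      by (rule eq_on_span[OF fin indw lin_on_UNIV[OF lP1] lin_on_UNIV[OF lin_zero] _ xs])
        (simp add: P1b wsBB)
    moreover have "N1 x = 0"
      by (rule eq_on_span[OF fin indw lin_on_UNIV[OF lN1] lin_on_UNIV[OF lin_zero] _ xs])
        (simp add: N1b wsBB nxt_notin)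
    ultimately show ?thesis by blast
  qed
  have U2r: "span (set (rev ws)) = U2" unfolding U2_def by simp
  have fU: "lin_on scale S UNIV f" if "S \<subseteq> H" for S
    using lin_on_mono[OF flin] that unfolding H_def by blast
  have fH: "f x \<in> H" if "x \<in> H" for x using lin_onD(1)[OF flin] that unfolding H_def .
  have N1k: "N1 (us!k) = us!Suc k" if "Suc k < length us" for k
    using N1b usBB nxt_nth[OF distu that] that by simp
  have N1l: "N1 (us!(length us - 1)) = 0" if "us \<noteq> []"
    using N1b usBB nxt_last[OF distu that] that by simp
  have N2k: "N2 (rev ws!k) = rev ws!Suc k" if "Suc k < length (rev ws)" for k
  proof -
    have m: "rev ws ! k \<in> set ws" using that by (metis Suc_lessD nth_mem set_rev)
    show ?thesis using N2b[of "rev ws ! k"] wsBB[OF m] nxt_nth[OF distrw that] by simp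
  qed
  have N2l: "N2 (rev ws!(length (rev ws) - 1)) = 0" if "rev ws \<noteq> []"
  proof -
    have m: "rev ws ! (length (rev ws) - 1) \<in> set ws" using that
      by (metis diff_less length_greater_0_conv nth_mem set_rev zero_less_one)
    show ?thesis using N2b[of "rev ws ! (length (rev ws) - 1)"] wsBB[OF m] nxt_last[OF distrw that] by simp
  qed
  have B1: "lin_on scale (span (set us)) (span (set us)) (\<lambda>x. P1 (f x))"
    using lin_on_comp[OF fU[OF U1H] lin_imp_lin_on[OF lP1 P1in]] unfolding U1_def .
  have B1k: "P1 (f (us!k)) - scale 0 (us!k) \<in> span (set (drop (Suc k) us))" if k: "k < length us" for k
  proof -
    from C1 k have "(Suc k < length us \<and> f (us!k) = us!Suc k) \<or> f (us!k) \<in> set ws" by blast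
    then show ?thesis
    proof
      assume a: "Suc k < length us \<and> f (us!k) = us!Suc k"
      then have "P1 (f (us!k)) = us!Suc k" using P1b usBB by simp
      moreover have "us!Suc k \<in> set (drop (Suc k) us)" using a unfolding set_drop_nth by auto
      ultimately show ?thesis by (simp add: span_base)
    next
      assume "f (us!k) \<in> set ws"
      then have "P1 (f (us!k)) = 0" using P1b wsBB by simp
      then show ?thesis by (simp add: span_zero)
    qed
  qed
  obtain Y1 where lY1: "lin Y1" and Y1in: "\<forall>x\<in>U1. Y1 x \<in> U1"
    and Y1eq: "\<forall>x\<in>U1. N1 (Y1 x) - Y1 (N1 x) = P1 (f x)"
    using lemL[OF distu indu lN1 N1k N1l B1 B1k] unfolding U1_def by auto
  have P2span: "P2 y \<in> span T" if "y \<in> span (set us \<union> T)" "T \<subseteq> set ws" for y T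
  proof -
    have "P2 ` (set us \<union> T) \<subseteq> insert 0 T"
      using P2b usBB wsBB that(2) by auto
    then have "span (P2 ` (set us \<union> T)) \<subseteq> span T" by (metis span_insert_0 span_mono)
    moreover have "P2 y \<in> span (P2 ` (set us \<union> T))" using P.linear_span_image[OF lP2] that(1) by blast
    ultimately show ?thesis by blast
  qed
  define c2 where "c2 k = representation (set (rev ws)) (P2 (f (rev ws!k))) (rev ws!k)" for k
  have B2: "lin_on scale (span (set (rev ws))) (span (set (rev ws))) (\<lambda>x. P2 (f x))"
    using lin_on_comp[OF fU[OF U2H] lin_imp_lin_on[OF lP2 P2in]] unfolding U2r .
  have B2k: "P2 (f (rev ws!k)) - scale (c2 k) (rev ws!k) \<in> span (set (drop (Suc k) (rev ws)))"
    if k: "k < length (rev ws)" for k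
  proof -
    define i where "i = length ws - Suc k"
    have i: "i < length ws" "rev ws ! k = ws ! i" using k unfolding i_def by (auto simp: rev_nth)
    have "f (ws!i) \<in> span (set us \<union> set (take (Suc i) ws))" using C2 i by blast
    then have "P2 (f (ws!i)) \<in> span (set (take (Suc i) ws))" by (rule P2span) (rule set_take_subset)
    moreover have "set (take (Suc i) ws) = set (drop k (rev ws))"
      using k unfolding drop_rev i_def by (simp add: Suc_diff_Suc)
    ultimately have "P2 (f (rev ws!k)) \<in> span (set (drop k (rev ws)))" using i by simp
    from drop_decomp[OF distrw indrw k this] show ?thesis unfolding c2_def .
  qed
  have trBB: "trc BB f = 0"
    using trc_inv[OF finE indE finBB indBB _ flin] tr0 spn unfolding BB_def by simp
  have tru: "representation BB (f b) b = 0" if b: "b \<in> set us" for b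
  proof -
    obtain k where k: "k < length us" "b = us!k" using b by (auto simp: in_set_conv_nth)
    from C1 k have "(Suc k < length us \<and> f (us!k) = us!Suc k) \<or> f (us!k) \<in> set ws" by blast
    then show ?thesis
    proof
      assume a: "Suc k < length us \<and> f (us!k) = us!Suc k"
      then have "us!Suc k \<noteq> us!k" using distu k by (simp add: nth_eq_iff_index_eq)
      moreover have "us!Suc k \<in> BB" using a usBB by simp
      ultimately show ?thesis using a k representation_basis[OF indBB] by simp
    next
      assume a: "f (us!k) \<in> set ws"
      then have "f (us!k) \<noteq> us!k" using disj k nth_mem[OF k(1)] a by (metis disjoint_iff)
      moreover have "f (us!k) \<in> BB" using a wsBB by simp
      ultimately show ?thesis using k representation_basis[OF indBB] by simp
    qed
  qed
  have trw: "representation BB (f b) b = representation (set ws) (P2 (f b)) b" if b: "b \<in> set ws" for b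
  proof -
    have bH: "b \<in> H" using b U2H span_base unfolding U2_def by blast
    have fb: "f b = P1 (f b) + P2 (f b)" using P12[OF fH[OF bH]] by simp
    have p1: "P1 (f b) \<in> span BB" using P1in U1H HBB by blast
    have p2: "P2 (f b) \<in> span BB" using P2in U2H HBB by blast
    have r1: "representation BB (P1 (f b)) = representation (set us) (P1 (f b))"
      by (rule representation_extend[OF indBB]) (use P1in in \<open>auto simp: U1_def BB_def\<close>)
    have r2: "representation BB (P2 (f b)) = representation (set ws) (P2 (f b))"
      by (rule representation_extend[OF indBB]) (use P2in in \<open>auto simp: U2_def BB_def\<close>)
    have "representation (set us) (P1 (f b)) b = 0" using representation_ne_zero b wsBB by metis
    then show ?thesis using representation_add[OF indBB p2 p1] fb r1 r2 by (metis add.left_neutral)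
  qed
  have trsplit: "trc BB f = (\<Sum>b\<in>set us. representation BB (f b) b) + (\<Sum>b\<in>set ws. representation BB (f b) b)"
    unfolding trc_def BB_def by (rule sum.union_disjoint) (use disj in auto)
  have tr2: "(\<Sum>k<length (rev ws). c2 k) = 0"
  proof -
    have "(\<Sum>k<length (rev ws). c2 k) = (\<Sum>b\<in>set (rev ws). representation (set ws) (P2 (f b)) b)"
      unfolding c2_def set_rev using sum_nth_set[OF distrw, of "\<lambda>b. representation (set ws) (P2 (f b)) b"] by simp
    also have "\<dots> = (\<Sum>b\<in>set ws. representation BB (f b) b)" using trw by simp
    also have "\<dots> = 0" using trBB trsplit tru by simp
    finally show ?thesis .
  qed
  obtain Y2 where lY2: "lin Y2" and Y2in: "\<forall>x\<in>U2. Y2 x \<in> U2"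
    and Y2eq: "\<forall>x\<in>U2. N2 (Y2 x) - Y2 (N2 x) = P2 (f x)"
    using lemL[OF distrw indrw lN2 N2k N2l B2 B2k tr2] unfolding U2r by auto
  obtain R2 where R2in: "\<forall>y\<in>U2. R2 y \<in> U2" and R2eq: "\<forall>y\<in>U2. R2 y + scale 1 (N2 (R2 y)) = y"
    using lemInv[OF distrw indrw lN2 N2k N2l, of 1] unfolding U2r by blast
  have C21: "lin_on scale (span (set us)) U2 (\<lambda>x. P2 (f x))"
    using lin_on_comp[OF fU[OF U1H] lin_imp_lin_on[OF lP2 P2in]] unfolding U1_def .
  obtain Z21 where lZ21: "lin Z21" and Z21in: "\<forall>x\<in>U1. Z21 x \<in> U2"
    and Z21eq: "\<forall>x\<in>U1. (Z21 x + scale 1 (N2 (Z21 x))) - Z21 (scale 1 (N1 x)) = P2 (f x)"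
  proof -
    have "\<exists>Z. lin Z \<and> (\<forall>x\<in>span (set us). Z x \<in> U2) \<and>
       (\<forall>x\<in>span (set us). (Z x + scale 1 (N2 (Z x))) - Z (scale 1 (N1 x)) = P2 (f x))"
      by (rule lemS[where U=U2 and R=R2 and d=1, OF distu indu lN1 N1k N1l lin_add[OF lin_id lin_scalec[OF lN2]] _ _ sU2 C21])
        (use R2in R2eq in auto)
    then show ?thesis using that unfolding U1_def by blast
  qed
  obtain R1 where R1in: "\<forall>y\<in>U1. R1 y \<in> U1" and R1eq: "\<forall>y\<in>U1. R1 y + scale (-1) (N1 (R1 y)) = y"
    using lemInv[OF distu indu lN1 N1k N1l, of "-1"] unfolding U1_def by blast
  have C12: "lin_on scale (span (set (rev ws))) U1 (\<lambda>x. scale (-1) (P1 (f x)))"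
    using lin_on_comp[OF fU[OF U2H] lin_imp_lin_on[OF lin_scalec[OF lP1]]] P1in subspace_scale[OF sU1]
    unfolding U2r by blast
  obtain Z12 where lZ12: "lin Z12" and Z12in: "\<forall>x\<in>U2. Z12 x \<in> U1"
    and Z12eq: "\<forall>x\<in>U2. (Z12 x + scale (-1) (N1 (Z12 x))) - Z12 (scale (-1) (N2 x)) = scale (-1) (P1 (f x))"
  proof -
    have "\<exists>Z. lin Z \<and> (\<forall>x\<in>span (set (rev ws)). Z x \<in> U1) \<and>
       (\<forall>x\<in>span (set (rev ws)). (Z x + scale (-1) (N1 (Z x))) - Z (scale (-1) (N2 x)) = scale (-1) (P1 (f x)))"
      by (rule lemS[where U=U1 and R=R1 and d="-1", OF distrw indrw lN2 N2k N2l lin_add[OF lin_id lin_scalec[OF lN1]] _ _ sU1 C12])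
        (use R1in R1eq in auto)
    then show ?thesis using that unfolding U2r by blast
  qed
  define X where "X x = N1 (P1 x) + P2 x + N2 (P2 x)" for x
  define Y where "Y x = Y1 (P1 x) + Z12 (P2 x) + (Y2 (P2 x) + Z21 (P1 x))" for x
  have lX: "lin X" unfolding X_def[abs_def]
    by (rule lin_add[OF lin_add[OF lin_comp[OF lP1 lN1] lP2] lin_comp[OF lP2 lN2]])
  have lY: "lin Y" unfolding Y_def[abs_def]
    by (rule lin_add[OF lin_add[OF lin_comp[OF lP1 lY1] lin_comp[OF lP2 lZ12]]
          lin_add[OF lin_comp[OF lP2 lY2] lin_comp[OF lP1 lZ21]]])
  have XH: "X x \<in> H" for x
    unfolding X_def using N1in P2in N2in U1H U2H subspace_add[OF sH] by (meson subsetD)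
  have YH: "Y x \<in> H" for x
  proof -
    have "Y1 (P1 x) \<in> H" "Z12 (P2 x) \<in> H" "Y2 (P2 x) \<in> H" "Z21 (P1 x) \<in> H"
      using Y1in Z12in Y2in Z21in P1in P2in U1H U2H by blast+
    then show ?thesis unfolding Y_def using subspace_add[OF sH] by metis
  qed
  have main: "f x = X (Y x) - Y (X x)" if xH: "x \<in> H" for x
  proof -
    define x1 where "x1 = P1 x"
    define x2 where "x2 = P2 x"
    have x1: "x1 \<in> U1" and x2: "x2 \<in> U2" unfolding x1_def x2_def using P1in P2in by auto
    have xx: "x = x1 + x2" unfolding x1_def x2_def using P12[OF xH] by simp
    define a where "a = Y1 x1 + Z12 x2"
    define b where "b = Y2 x2 + Z21 x1"
    have a: "a \<in> U1" unfolding a_def using Y1in Z12in x1 x2 subspace_add[OF sU1] by blast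
    have b: "b \<in> U2" unfolding b_def using Y2in Z21in x1 x2 subspace_add[OF sU2] by blast
    have Yx: "Y x = a + b" unfolding Y_def a_def b_def x1_def x2_def ..
    have P1ab: "P1 (a + b) = a" using P.linear_add[OF lP1] onU1[OF a] onU2[OF b] by simp
    have P2ab: "P2 (a + b) = b" using P.linear_add[OF lP2] onU1[OF a] onU2[OF b] by simp
    have XY: "X (Y x) = N1 a + b + N2 b" unfolding X_def Yx P1ab P2ab ..
    define n1 where "n1 = N1 x1"
    define m2 where "m2 = x2 + N2 x2"
    have n1: "n1 \<in> U1" unfolding n1_def using N1in .
    have m2: "m2 \<in> U2" unfolding m2_def using x2 N2in subspace_add[OF sU2] by blast
    have Xx: "X x = n1 + m2" unfolding X_def n1_def m2_def x1_def x2_def by (simp add: add.assoc)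
    have P1X: "P1 (X x) = n1" unfolding Xx using P.linear_add[OF lP1] onU1[OF n1] onU2[OF m2] by simp
    have P2X: "P2 (X x) = m2" unfolding Xx using P.linear_add[OF lP2] onU1[OF n1] onU2[OF m2] by simp
    have YX: "Y (X x) = Y1 n1 + (Z12 x2 + Z12 (N2 x2)) + ((Y2 x2 + Y2 (N2 x2)) + Z21 n1)"
      unfolding Y_def P1X P2X m2_def using P.linear_add[OF lZ12] P.linear_add[OF lY2] by simp
    have Na: "N1 a = N1 (Y1 x1) + N1 (Z12 x2)" unfolding a_def using P.linear_add[OF lN1] by simp
    have Nb: "N2 b = N2 (Y2 x2) + N2 (Z21 x1)" unfolding b_def using P.linear_add[OF lN2] by simp
    have E1: "N1 (Y1 x1) - Y1 n1 = P1 (f x1)" unfolding n1_def using Y1eq x1 by blast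
    have E2: "N2 (Y2 x2) - Y2 (N2 x2) = P2 (f x2)" using Y2eq x2 by blast
    have E3: "Z21 x1 + N2 (Z21 x1) - Z21 n1 = P2 (f x1)" unfolding n1_def using Z21eq x1 by simp
    have E4: "Z12 x2 - N1 (Z12 x2) + Z12 (N2 x2) = - P1 (f x2)"
      using Z12eq x2 P.linear_neg[OF lZ12] by simp
    have "X (Y x) - Y (X x) = (N1 (Y1 x1) - Y1 n1) + (N2 (Y2 x2) - Y2 (N2 x2))
        + (Z21 x1 + N2 (Z21 x1) - Z21 n1) - (Z12 x2 - N1 (Z12 x2) + Z12 (N2 x2))"
      unfolding XY YX Na Nb unfolding b_def by (simp add: algebra_simps)
    also have "\<dots> = P1 (f x1) + P2 (f x2) + P2 (f x1) + P1 (f x2)"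
      unfolding E1 E2 E3 E4 by simp
    also have "\<dots> = P1 (f x1 + f x2) + P2 (f x1 + f x2)"
      using P.linear_add[OF lP1] P.linear_add[OF lP2] by (simp add: algebra_simps)
    also have "\<dots> = f x1 + f x2"
      using P12 fH x1 x2 U1H U2H subspace_add[OF sH] by (meson subsetD)
    also have "\<dots> = f x"
      unfolding xx using lin_onD(2)[OF flin] x1 x2 U1H U2H unfolding H_def by (metis subsetD)
    finally show ?thesis by simp
  qed
  show ?thesis
    by (rule exI[of _ X], rule exI[of _ Y]) (use lX lY XH YH main in \<open>auto simp: H_def\<close>)
qed

end

context VS begin
lemma proj:
  assumes ind: "independent Bv" and fin: "finite Bv" and A: "A \<subseteq> Bv"
  defines "pr \<equiv> P.construct Bv (\<lambda>b. if b \<in> A then b else 0)"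
  shows "lin pr" "x \<in> span A \<Longrightarrow> pr x = x" "x \<in> span (Bv - A) \<Longrightarrow> pr x = 0" "pr x \<in> span A"
proof -
  show lp: "lin pr" unfolding pr_def by (rule P.linear_construct[OF ind])
  have pb: "pr b = (if b \<in> A then b else 0)" if "b \<in> Bv" for b
    unfolding pr_def using P.construct_basis[OF ind that] .
  have finA: "finite A" using fin A finite_subset by blast
  have indA: "independent A" using ind A dependent_mono by blast
  show "pr x = x" if "x \<in> span A"
    by (rule eq_on_span[OF finA indA lin_on_UNIV[OF lp] lin_on_UNIV[OF lin_id] _ that])
      (use pb A in auto)
  have finA': "finite (Bv - A)" using fin by simp
  have indA': "independent (Bv - A)" using ind dependent_mono by (metis Diff_subset)
  show "pr x = 0" if "x \<in> span (Bv - A)"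
    by (rule eq_on_span[OF finA' indA' lin_on_UNIV[OF lp] lin_on_UNIV[OF P.linear_zero] _ that])
      (use pb in auto)
  have "pr x \<in> span ((\<lambda>b. if b \<in> A then b else 0) ` Bv)"
    unfolding pr_def by (rule P.construct_in_span[OF ind])
  moreover have "span ((\<lambda>b. if b \<in> A then b else 0) ` Bv) \<subseteq> span A"
    by (rule span_minimal) (auto simp: span_base span_zero)
  ultimately show "pr x \<in> span A" by blast
qed
end

locale CX = VS scale for scale :: "'k::field \<Rightarrow> 'v::ab_group_add \<Rightarrow> 'v" +
  fixes V :: "int \<Rightarrow> 'v set" and d :: "int \<Rightarrow> 'v \<Rightarrow> 'v"
  assumes cx: "is_complex scale V d"
begin

definition Zs where "Zs i = cocycles V d i"
definition Us where "Us i = coboundaries V d i"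
definition BU where "BU i = (SOME BU. \<not> dependent BU \<and> span BU = Us i)"
definition BB where "BB i = (SOME B. BU i \<subseteq> B \<and> \<not> dependent B \<and> span B = Zs i)"
definition BV where "BV i = (SOME B. BB i \<subseteq> B \<and> \<not> dependent B \<and> span B = V i)"
definition EE where "EE i = BB i - BU i"

lemma qt: "quot_trace scale (Zs i) (Us i) g = (\<Sum>b\<in>EE i. representation (BB i) (g b) b)"
  unfolding quot_trace_def Let_def BU_def[symmetric] BB_def[symmetric] EE_def ..

lemma Vfin: "\<exists>B. finite B \<and> span B = V i" using cx unfolding is_complex_def by blast
lemma dlin: "lin_on scale (V i) (V (i + 1)) (d i)" using cx unfolding is_complex_def by blast
lemma dlin': "lin_on scale (V (i - 1)) (V i) (d (i - 1))" using dlin[of "i - 1"] by simp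
lemma dd: "x \<in> V i \<Longrightarrow> d (i + 1) (d i x) = 0" using cx unfolding is_complex_def by blast
lemma dd': "x \<in> V (i - 1) \<Longrightarrow> d i (d (i - 1) x) = 0" using dd[of x "i - 1"] by simp

lemma sV: "subspace (V i)" using Vfin[of i] by (metis subspace_span)

lemma indep_fin: "independent S \<Longrightarrow> S \<subseteq> V i \<Longrightarrow> finite S"
  using Vfin[of i] independent_span_bound by metis

lemma d0: "d i 0 = 0" using lin_on_zero[OF dlin sV] .

lemma sZ: "subspace (Zs i)"
  unfolding subspace_def Zs_def cocycles_def
  using sV[of i] lin_onD[OF dlin[of i]] d0[of i]
  by (auto simp: subspace_0 subspace_add subspace_scale)

lemma sU: "subspace (Us i)"
  unfolding Us_def coboundaries_def
proof (unfold subspace_def, intro conjI ballI allI)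
  show "0 \<in> d (i - 1) ` V (i - 1)" using sV[of "i-1"] d0[of "i-1"] subspace_0 by (metis image_eqI)
next
  fix x y assume "x \<in> d (i - 1) ` V (i - 1)" "y \<in> d (i - 1) ` V (i - 1)"
  then obtain x' y' where "x' \<in> V (i - 1)" "y' \<in> V (i - 1)" "x = d (i - 1) x'" "y = d (i - 1) y'" by blast
  then show "x + y \<in> d (i - 1) ` V (i - 1)"
    using lin_onD(2)[OF dlin'[of i]] subspace_add[OF sV] by (metis image_eqI)
next
  fix c x assume "x \<in> d (i - 1) ` V (i - 1)"
  then obtain x' where "x' \<in> V (i - 1)" "x = d (i - 1) x'" by blast
  then show "scale c x \<in> d (i - 1) ` V (i - 1)"
    using lin_onD(3)[OF dlin'[of i]] subspace_scale[OF sV] by (metis image_eqI)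
qed

lemma ZV: "Zs i \<subseteq> V i" unfolding Zs_def cocycles_def by auto
lemma UZ: "Us i \<subseteq> Zs i"
  unfolding Us_def coboundaries_def Zs_def cocycles_def
  using lin_onD(1)[OF dlin'[of i]] dd' by auto

lemma basis_of_sub:
  assumes "subspace W" "S \<subseteq> W" "independent S"
  shows "\<exists>B. S \<subseteq> B \<and> independent B \<and> span B = W"
proof -
  obtain B where "S \<subseteq> B" "B \<subseteq> W" "independent B" "W \<subseteq> span B"
    using maximal_independent_subset_extend[OF assms(2,3)] by blast
  moreover have "span B \<subseteq> W" using \<open>B \<subseteq> W\<close> assms(1) span_minimal by blast
  ultimately show ?thesis by blast
qed

lemma BU: "independent (BU i) \<and> span (BU i) = Us i"
proof -
  have "\<exists>B. independent B \<and> span B = Us i" using basis_of_sub[OF sU empty_subsetI independent_empty] by blast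
  then show ?thesis unfolding BU_def by (rule someI_ex)
qed

lemma BB: "BU i \<subseteq> BB i \<and> independent (BB i) \<and> span (BB i) = Zs i"
proof -
  have "BU i \<subseteq> Zs i" using BU[of i] UZ span_base by blast
  then have "\<exists>B. BU i \<subseteq> B \<and> independent B \<and> span B = Zs i"
    using basis_of_sub[OF sZ _ conjunct1[OF BU]] by blast
  then show ?thesis unfolding BB_def by (rule someI_ex)
qed

lemma BV: "BB i \<subseteq> BV i \<and> independent (BV i) \<and> span (BV i) = V i"
proof -
  have "BB i \<subseteq> V i" using BB[of i] ZV span_base by blast
  then have "\<exists>B. BB i \<subseteq> B \<and> independent B \<and> span B = V i"
    using basis_of_sub[OF sV _ conjunct1[OF conjunct2[OF BB]]] by blast
  then show ?thesis unfolding BV_def by (rule someI_ex)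
qed

lemma BVsub: "BV i \<subseteq> V i" using BV[of i] span_base by blast
lemma finBV: "finite (BV i)" using indep_fin BV BVsub by blast
lemma finBB: "finite (BB i)" using finBV BV finite_subset by blast
lemma finBU: "finite (BU i)" using finBB BB finite_subset by blast
lemma finEE: "finite (EE i)" unfolding EE_def using finBB by simp
lemma indBB: "independent (BB i)" using BB by blast
lemma indBU: "independent (BU i)" using BU by blast
lemma indBV: "independent (BV i)" using BV by blast
lemma indEE: "independent (EE i)" unfolding EE_def using indBB dependent_mono by (metis Diff_subset)
lemma EEsub: "EE i \<subseteq> BV i" unfolding EE_def using BB BV by blast
lemma BUsub: "BU i \<subseteq> BV i" using BB BV by blast

definition pp where "pp i = P.construct (BV i) (\<lambda>b. if b \<in> EE i then b else 0)"
definition qq where "qq i = P.construct (BV i) (\<lambda>b. if b \<in> BU i then b else 0)"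
definition rr where "rr i = P.construct (BV i) (\<lambda>b. if b \<in> BV i - BB i then b else 0)"
definition Hs where "Hs i = span (EE i)"
definition Cs where "Cs i = span (BV i - BB i)"

lemmas pp = proj[OF indBV finBV EEsub, folded pp_def]
lemmas qq = proj[OF indBV finBV BUsub, folded qq_def]
lemma CBsub: "BV i - BB i \<subseteq> BV i" by blast
lemmas rr = proj[OF indBV finBV CBsub, folded rr_def]

lemma sH: "subspace (Hs i)" unfolding Hs_def by simp
lemma sC: "subspace (Cs i)" unfolding Cs_def by simp
lemma HZ: "Hs i \<subseteq> Zs i" unfolding Hs_def EE_def using BB[of i] span_mono by (metis Diff_subset)
lemma HV: "Hs i \<subseteq> V i" using HZ ZV by blast
lemma CV: "Cs i \<subseteq> V i" unfolding Cs_def using BV[of i] span_mono by (metis Diff_subset)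
lemma Uspan: "Us i = span (BU i)" using BU by simp
lemma Zspan: "Zs i = span (BB i)" using BB by simp

lemma pp_in: "pp i x \<in> Hs i" using pp(4) unfolding Hs_def .
lemma qq_in: "qq i x \<in> Us i" using qq(4) Uspan by simp
lemma rr_in: "rr i x \<in> Cs i" using rr(4) unfolding Cs_def .
lemma pp_H: "x \<in> Hs i \<Longrightarrow> pp i x = x" using pp(2) unfolding Hs_def .
lemma pp_U: "x \<in> Us i \<Longrightarrow> pp i x = 0"
proof -
  assume "x \<in> Us i"
  moreover have "span (BU i) \<subseteq> span (BV i - EE i)" using BUsub unfolding EE_def by (intro span_mono) auto
  ultimately show "pp i x = 0" using pp(3) Uspan by blast
qed
lemma qq_U: "x \<in> Us i \<Longrightarrow> qq i x = x" using qq(2) Uspan by blast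
lemma rr_Z: "x \<in> Zs i \<Longrightarrow> rr i x = 0"
proof -
  assume "x \<in> Zs i"
  moreover have "BV i - (BV i - BB i) = BB i" using BV[of i] by blast
  ultimately show "rr i x = 0" using rr(3) Zspan by metis
qed
lemma qq_Z: "qq i x \<in> Zs i" using qq_in UZ by blast
lemma pp_Z: "pp i x \<in> Zs i" using pp_in HZ by blast

lemma decomp: "x \<in> V i \<Longrightarrow> qq i x + pp i x + rr i x = x"
proof -
  assume x: "x \<in> V i"
  have l: "lin (\<lambda>x. qq i x + pp i x + rr i x)" by (intro lin_add qq(1) pp(1) rr(1))
  have "qq i b + pp i b + rr i b = b" if bB: "b \<in> BV i" for b
  proof -
    consider "b \<in> BU i" | "b \<in> EE i" | "b \<in> BV i - BB i" using bB BB[of i] unfolding EE_def by blast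
    then show ?thesis
    proof cases
      case 1
      then have "b \<in> Us i" using Uspan span_base by blast
      then have "b \<in> Zs i" using UZ by blast
      then show ?thesis using qq_U[OF \<open>b \<in> Us i\<close>] pp_U[OF \<open>b \<in> Us i\<close>] rr_Z by simp
    next
      case 2
      then have "b \<in> Hs i" unfolding Hs_def using span_base by blast
      have "b \<in> BV i - BU i" using 2 bB unfolding EE_def by blast
      then have "qq i b = 0" using qq(3) span_base by blast
      moreover have "pp i b = b" using pp_H \<open>b \<in> Hs i\<close> .
      moreover have "rr i b = 0" using rr_Z HZ \<open>b \<in> Hs i\<close> by blast
      ultimately show ?thesis by simp
    next
      case 3
      then have bc: "b \<in> Cs i" unfolding Cs_def using span_base by blast
      have "b \<in> BV i - BU i" using 3 BB[of i] by blast
      then have "qq i b = 0" using qq(3) span_base by blast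
      moreover have "b \<in> BV i - EE i" using 3 unfolding EE_def by blast
      then have "pp i b = 0" using pp(3) span_base by blast
      moreover have "rr i b = b" using rr(2)[of b i] 3 span_base by blast
      ultimately show ?thesis by simp
    qed
  qed
  then show ?thesis
    using eq_on_span[OF finBV indBV lin_on_UNIV[OF l] lin_on_UNIV[OF lin_id]] x BV[of i] by blast
qed

lemma CZ0: "x \<in> Cs i \<Longrightarrow> x \<in> Zs i \<Longrightarrow> x = 0"
  using rr(2)[of x i] rr_Z[of x i] unfolding Cs_def by simp

lemma d_lin: "x \<in> V i \<Longrightarrow> y \<in> V i \<Longrightarrow> d i (x + y) = d i x + d i y"
  using lin_onD(2)[OF dlin] .
lemma d_in: "x \<in> V i \<Longrightarrow> d i x \<in> V (i + 1)" using lin_onD(1)[OF dlin] .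
lemma dZ: "x \<in> Zs i \<Longrightarrow> d i x = 0" unfolding Zs_def cocycles_def by auto

lemma d_rr: "x \<in> V i \<Longrightarrow> d i x = d i (rr i x)"
proof -
  assume x: "x \<in> V i"
  have "d i x = d i (qq i x + pp i x + rr i x)" using decomp[OF x] by simp
  also have "\<dots> = d i (qq i x) + d i (pp i x) + d i (rr i x)"
    using d_lin qq_Z pp_Z rr_in ZV CV subspace_add[OF sV] by (metis subsetD)
  also have "\<dots> = d i (rr i x)" using dZ qq_Z pp_Z by simp
  finally show ?thesis .
qed

definition tau where "tau i u = (SOME c. c \<in> Cs (i - 1) \<and> d (i - 1) c = u)"

lemma tau: assumes u: "u \<in> Us i" shows "tau i u \<in> Cs (i - 1) \<and> d (i - 1) (tau i u) = u"
proof -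
  obtain y where y: "y \<in> V (i - 1)" "u = d (i - 1) y" using u unfolding Us_def coboundaries_def by blast
  have "rr (i - 1) y \<in> Cs (i - 1) \<and> d (i - 1) (rr (i - 1) y) = u" using rr_in d_rr[OF y(1)] y(2) by simp
  then have "\<exists>c. c \<in> Cs (i - 1) \<and> d (i - 1) c = u" by blast
  then show ?thesis unfolding tau_def by (rule someI_ex)
qed

definition hh where "hh i = P.construct (BV i) (\<lambda>b. if b \<in> BU i then tau i b else 0)"

lemma hh_lin: "lin (hh i)" unfolding hh_def by (rule P.linear_construct[OF indBV])

lemma hh_in: "hh i x \<in> Cs (i - 1)"
proof -
  have "hh i x \<in> span ((\<lambda>b. if b \<in> BU i then tau i b else 0) ` BV i)"
    unfolding hh_def by (rule P.construct_in_span[OF indBV])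
  moreover have "span ((\<lambda>b. if b \<in> BU i then tau i b else 0) ` BV i) \<subseteq> Cs (i - 1)"
  proof (rule span_minimal[OF _ sC], rule image_subsetI)
    fix b show "(if b \<in> BU i then tau i b else 0) \<in> Cs (i - 1)"
      using tau Uspan span_base subspace_0[OF sC] by auto
  qed
  ultimately show ?thesis by blast
qed

lemma hh_V: "hh i x \<in> V (i - 1)" using hh_in CV by blast

lemma H1: assumes x: "x \<in> V i" shows "d (i - 1) (hh i x) = qq i x"
proof -
  have g1: "lin_on scale (span (BV i)) (V i) (\<lambda>x. d (i - 1) (hh i x))"
    by (rule lin_on_comp[OF lin_imp_lin_on[OF hh_lin hh_V] dlin'])
  have "d (i - 1) (hh i b) = qq i b" if bB: "b \<in> BV i" for b
  proof (cases "b \<in> BU i")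
    case True
    then have bU: "b \<in> Us i" using Uspan span_base by blast
    have "hh i b = tau i b" unfolding hh_def using P.construct_basis[OF indBV bB] True by simp
    then show ?thesis using tau[OF bU] qq_U[OF bU] by simp
  next
    case False
    have "hh i b = 0" unfolding hh_def using P.construct_basis[OF indBV bB] False by simp
    moreover have "qq i b = 0" using qq(3) span_base bB False by blast
    ultimately show ?thesis using d0 by simp
  qed
  then show ?thesis using eq_on_span[OF finBV indBV g1 lin_on_UNIV[OF qq(1)]] x BV[of i] by blast
qed

lemma H2: assumes x: "x \<in> V i" shows "hh (i + 1) (d i x) = rr i x"
proof -
  define c where "c = rr i x"
  have cC: "c \<in> Cs i" unfolding c_def by (rule rr_in)
  have cV: "c \<in> V i" using cC CV by blast
  have dx: "d i x = d i c" unfolding c_def by (rule d_rr[OF x])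
  define y where "y = d i c"
  have yU: "y \<in> Us (i + 1)" unfolding y_def Us_def coboundaries_def using cV by simp
  have yV: "y \<in> V (i + 1)" using yU UZ ZV by blast
  define w where "w = hh (i + 1) y"
  have wC: "w \<in> Cs i" unfolding w_def using hh_in[of "i + 1" y] by simp
  have wV: "w \<in> V i" using wC CV by blast
  have "d i w = qq (i + 1) y" unfolding w_def using H1[OF yV] by simp
  also have "\<dots> = y" using qq_U[OF yU] .
  finally have dw: "d i w = y" .
  have "d i (w - c) = 0" using lin_on_diff[OF dlin sV wV cV] dw unfolding y_def by simp
  then have "w - c \<in> Zs i" unfolding Zs_def cocycles_def using subspace_diff[OF sV wV cV] by simp
  moreover have "w - c \<in> Cs i" using subspace_diff[OF sC wC cC] .
  ultimately have "w - c = 0" using CZ0 by blast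
  then have "w = c" by simp
  then show ?thesis unfolding w_def y_def dx c_def by simp
qed

lemma htpy: assumes x: "x \<in> V i" shows "d (i - 1) (hh i x) + hh (i + 1) (d i x) = x - pp i x"
  using H1[OF x] H2[OF x] decomp[OF x] by (simp add: algebra_simps)

lemma pp_d: "y \<in> V (i - 1) \<Longrightarrow> pp i (d (i - 1) y) = 0"
  using pp_U unfolding Us_def coboundaries_def by blast

lemma d_pp: "d i (pp i x) = 0" using dZ pp_Z by blast

end

context CX begin

lemma pp_lin_on: "lin_on scale S UNIV (pp i)" using lin_on_UNIV[OF pp(1)] .

lemma rep_pp:
  assumes y: "y \<in> Zs i" and e: "e \<in> EE i"
  shows "representation (EE i) (pp i y) e = representation (BB i) y e"
proof -
  have yV: "y \<in> V i" using y ZV by blast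
  have ypq: "pp i y = y - qq i y" using decomp[OF yV] rr_Z[OF y] by (simp add: algebra_simps)
  have EB: "EE i \<subseteq> BB i" unfolding EE_def by blast
  have ppS: "pp i y \<in> span (EE i)" using pp(4) .
  have r1: "representation (BB i) (pp i y) = representation (EE i) (pp i y)"
    by (rule representation_extend[OF indBB ppS EB])
  have qS: "qq i y \<in> span (BU i)" using qq(4) .
  have r2: "representation (BB i) (qq i y) = representation (BU i) (qq i y)"
    by (rule representation_extend[OF indBB qS]) (use BB in blast)
  have eBU: "e \<notin> BU i" using e unfolding EE_def by blast
  have r3: "representation (BU i) (qq i y) e = 0" using representation_ne_zero eBU by metis
  have yB: "y \<in> span (BB i)" using y Zspan by simp
  have qB: "qq i y \<in> span (BB i)" using qq_Z Zspan by simp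
  have "representation (BB i) (pp i y) e = representation (BB i) y e - representation (BB i) (qq i y) e"
    unfolding ypq using representation_diff[OF indBB qB yB] by simp
  then show ?thesis using r1 r2 r3 by simp
qed

lemma qt_trc:
  assumes g: "\<And>b. b \<in> EE i \<Longrightarrow> g b \<in> Zs i"
  shows "quot_trace scale (Zs i) (Us i) g = trc (EE i) (\<lambda>x. pp i (g x))"
  unfolding qt trc_def using rep_pp g by (intro sum.cong) auto

lemma EEZ: "EE i \<subseteq> Zs i" unfolding EE_def using BB[of i] span_base by blast

lemma chain_Z: assumes "chain_map scale V d g" "x \<in> Zs i" shows "g i x \<in> Zs i"
proof -
  have l: "lin_on scale (V i) (V i) (g i)" and c: "\<forall>x\<in>V i. d i (g i x) = g (i + 1) (d i x)"
    using assms(1) unfolding chain_map_def by auto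
  have xV: "x \<in> V i" using assms(2) ZV by blast
  have "d i (g i x) = g (i + 1) 0" using c xV dZ[OF assms(2)] by simp
  also have "\<dots> = 0" using chain_map_def assms(1) lin_on_zero sV by metis
  finally show ?thesis unfolding Zs_def cocycles_def using lin_onD(1)[OF l xV] by simp
qed

lemma chain_U: assumes "chain_map scale V d g" "x \<in> Us i" shows "g i x \<in> Us i"
proof -
  obtain y where y: "y \<in> V (i - 1)" "x = d (i - 1) y" using assms(2) unfolding Us_def coboundaries_def by blast
  have c: "\<forall>x\<in>V (i - 1). d (i - 1) (g (i - 1) x) = g (i - 1 + 1) (d (i - 1) x)"
    and l: "lin_on scale (V (i - 1)) (V (i - 1)) (g (i - 1))"
    using assms(1) unfolding chain_map_def by blast+
  have "g i x = d (i - 1) (g (i - 1) y)" using c y by simp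
  moreover have "g (i - 1) y \<in> V (i - 1)" using lin_onD(1)[OF l y(1)] .
  ultimately show ?thesis unfolding Us_def coboundaries_def by blast
qed

lemma chain_lin: "chain_map scale V d g \<Longrightarrow> lin_on scale (V i) (V i) (g i)"
  unfolding chain_map_def by blast

lemma a_to_b:
  assumes phi: "chain_map scale V d \<phi>" and al: "chain_map scale V d \<alpha>" and be: "chain_map scale V d \<beta>"
    and ho: "chain_homotopic scale V d \<phi> (\<lambda>i x. \<alpha> i (\<beta> i x) - \<beta> i (\<alpha> i x))"
  shows "cohom_trace scale V d \<phi> i = 0"
proof -
  obtain h where hl: "\<And>i. lin_on scale (V i) (V (i - 1)) (h i)"
    and he: "\<And>i x. x \<in> V i \<Longrightarrow> \<phi> i x - (\<alpha> i (\<beta> i x) - \<beta> i (\<alpha> i x)) = d (i - 1) (h i x) + h (i + 1) (d i x)"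
    using ho unfolding chain_homotopic_def by blast
  have lA: "lin_on scale (V i) (V i) (\<alpha> i)" and lB: "lin_on scale (V i) (V i) (\<beta> i)"
    and lP: "lin_on scale (V i) (V i) (\<phi> i)" using chain_lin al be phi by blast+
  define cm where "cm x = \<alpha> i (\<beta> i x) - \<beta> i (\<alpha> i x)" for x
  have diffU: "\<phi> i x - cm x \<in> Us i" if x: "x \<in> Zs i" for x
  proof -
    have xV: "x \<in> V i" using x ZV by blast
    have "h (i + 1) (d i x) = 0" using dZ[OF x] lin_on_zero[OF hl sV] by simp
    then have "\<phi> i x - cm x = d (i - 1) (h i x)" using he[OF xV] unfolding cm_def by simp
    moreover have "h i x \<in> V (i - 1)" using lin_onD(1)[OF hl xV] .
    ultimately show ?thesis unfolding Us_def coboundaries_def by blast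
  qed
  have Zcm: "cm x \<in> Zs i" if "x \<in> Zs i" for x
    unfolding cm_def using chain_Z[OF al] chain_Z[OF be] that subspace_diff[OF sZ] by blast
  have ppeq: "pp i (\<phi> i x) = pp i (cm x)" if x: "x \<in> Zs i" for x
  proof -
    have "pp i (\<phi> i x) - pp i (cm x) = pp i (\<phi> i x - cm x)" using P.linear_diff[OF pp(1)] by simp
    also have "\<dots> = 0" using pp_U diffU[OF x] by simp
    finally show ?thesis by simp
  qed
  have red: "pp i (g1 i (g2 i x)) = pp i (g1 i (pp i (g2 i x)))"
    if c1: "chain_map scale V d g1" and c2: "chain_map scale V d g2" and x: "x \<in> Zs i" for g1 g2 x
  proof -
    have y: "g2 i x \<in> Zs i" using chain_Z[OF c2 x] .
    have yV: "g2 i x \<in> V i" using y ZV by blast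
    have dec: "g2 i x = pp i (g2 i x) + qq i (g2 i x)" using decomp[OF yV] rr_Z[OF y] by (simp add: algebra_simps)
    have "g1 i (g2 i x) = g1 i (pp i (g2 i x)) + g1 i (qq i (g2 i x))"
      by (subst dec, rule lin_onD(2)[OF chain_lin[OF c1]]) (use HV pp_in qq_in UZ ZV in blast)+
    moreover have "pp i (g1 i (qq i (g2 i x))) = 0" using pp_U chain_U[OF c1 qq_in] by blast
    ultimately show ?thesis using P.linear_add[OF pp(1)] by simp
  qed
  have lpa: "lin_on scale (span (EE i)) (span (EE i)) (\<lambda>x. pp i (g i x))"
    if c: "chain_map scale V d g" for g
    using lin_on_comp[OF lin_on_mono[OF chain_lin[OF c] HV[unfolded Hs_def] subset_UNIV]
      lin_imp_lin_on[OF pp(1) pp(4)]] .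
  have "cohom_trace scale V d \<phi> i = quot_trace scale (Zs i) (Us i) (\<phi> i)"
    unfolding cohom_trace_def Zs_def Us_def ..
  also have "\<dots> = trc (EE i) (\<lambda>x. pp i (\<phi> i x))"
    by (rule qt_trc) (use chain_Z[OF phi] EEZ in blast)
  also have "\<dots> = trc (EE i) (\<lambda>x. pp i (\<alpha> i (\<beta> i x)) - pp i (\<beta> i (\<alpha> i x)))"
    using ppeq EEZ P.linear_diff[OF pp(1)] unfolding cm_def by (intro trc_cong) auto
  also have "\<dots> = trc (EE i) (\<lambda>x. pp i (\<alpha> i (\<beta> i x))) - trc (EE i) (\<lambda>x. pp i (\<beta> i (\<alpha> i x)))"
    by (rule trc_diff[OF indEE]) (use pp(4) in blast)+
  also have "trc (EE i) (\<lambda>x. pp i (\<alpha> i (\<beta> i x))) = trc (EE i) (\<lambda>x. pp i (\<alpha> i (pp i (\<beta> i x))))"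
    using red[OF al be] EEZ by (intro trc_cong) blast
  also have "trc (EE i) (\<lambda>x. pp i (\<beta> i (\<alpha> i x))) = trc (EE i) (\<lambda>x. pp i (\<beta> i (pp i (\<alpha> i x))))"
    using red[OF be al] EEZ by (intro trc_cong) blast
  also have "trc (EE i) (\<lambda>x. pp i (\<alpha> i (pp i (\<beta> i x)))) = trc (EE i) (\<lambda>x. pp i (\<beta> i (pp i (\<alpha> i x))))"
    using trc_cyc[OF finEE indEE lpa[OF al] lpa[OF be]] .
  finally show ?thesis by simp
qed

lemma b_to_a:
  assumes phi: "chain_map scale V d \<phi>" and tr: "\<forall>i. cohom_trace scale V d \<phi> i = 0"
  shows "\<exists>\<alpha> \<beta>. chain_map scale V d \<alpha> \<and> chain_map scale V d \<beta> \<and>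
            chain_homotopic scale V d \<phi> (\<lambda>i x. \<alpha> i (\<beta> i x) - \<beta> i (\<alpha> i x))"
proof -
  have lphi: "lin_on scale (V i) (V i) (\<phi> i)" for i using chain_lin[OF phi] .
  have cphi: "x \<in> V i \<Longrightarrow> d i (\<phi> i x) = \<phi> (i + 1) (d i x)" for i x
    using phi unfolding chain_map_def by blast
  have lf: "lin_on scale (span (EE i)) (span (EE i)) (\<lambda>x. pp i (\<phi> i x))" for i
    using lin_on_comp[OF lin_on_mono[OF lphi HV[unfolded Hs_def] subset_UNIV]
      lin_imp_lin_on[OF pp(1) pp(4)]] .
  have trz: "trc (EE i) (\<lambda>x. pp i (\<phi> i x)) = 0" for i
  proof -
    have "trc (EE i) (\<lambda>x. pp i (\<phi> i x)) = quot_trace scale (Zs i) (Us i) (\<phi> i)"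
      by (rule qt_trc[symmetric]) (use chain_Z[OF phi] EEZ in blast)
    also have "\<dots> = cohom_trace scale V d \<phi> i" unfolding cohom_trace_def Zs_def Us_def ..
    finally show ?thesis using tr by simp
  qed
  have VSs: "VS scale" by intro_locales
  have ex: "\<forall>i. \<exists>a b. lin a \<and> lin b \<and> (\<forall>x\<in>Hs i. a x \<in> Hs i) \<and> (\<forall>x\<in>Hs i. b x \<in> Hs i) \<and>
      (\<forall>x\<in>Hs i. pp i (\<phi> i x) = a (b x) - b (a x))"
  proof
    fix i
    interpret S: SH scale "EE i" "\<lambda>x. pp i (\<phi> i x)"
      by (rule SH.intro[OF VSs], unfold_locales) (rule finEE indEE lf)+
    show "\<exists>a b. lin a \<and> lin b \<and> (\<forall>x\<in>Hs i. a x \<in> Hs i) \<and> (\<forall>x\<in>Hs i. b x \<in> Hs i) \<and>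
      (\<forall>x\<in>Hs i. pp i (\<phi> i x) = a (b x) - b (a x))"
      using S.shoda[OF trz] unfolding Hs_def .
  qed
  then obtain A where "\<forall>i. \<exists>b. lin (A i) \<and> lin b \<and> (\<forall>x\<in>Hs i. A i x \<in> Hs i) \<and> (\<forall>x\<in>Hs i. b x \<in> Hs i) \<and>
      (\<forall>x\<in>Hs i. pp i (\<phi> i x) = A i (b x) - b (A i x))" by metis
  then obtain Bf where AB: "\<And>i. lin (A i) \<and> lin (Bf i) \<and> (\<forall>x\<in>Hs i. A i x \<in> Hs i) \<and> (\<forall>x\<in>Hs i. Bf i x \<in> Hs i) \<and>
      (\<forall>x\<in>Hs i. pp i (\<phi> i x) = A i (Bf i x) - Bf i (A i x))" by metis
  have lA: "lin (A i)" and lBf: "lin (Bf i)" and AH: "x \<in> Hs i \<Longrightarrow> A i x \<in> Hs i"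
    and BH: "x \<in> Hs i \<Longrightarrow> Bf i x \<in> Hs i"
    and ABeq: "x \<in> Hs i \<Longrightarrow> pp i (\<phi> i x) = A i (Bf i x) - Bf i (A i x)" for i x
    using AB by blast+
  define \<alpha> where "\<alpha> i x = A i (pp i x)" for i x
  define \<beta> where "\<beta> i x = Bf i (pp i x)" for i x
  have chainI: "chain_map scale V d (\<lambda>i x. G i (pp i x))"
    if lG: "\<And>i. lin (G i)" and GH: "\<And>i x. x \<in> Hs i \<Longrightarrow> G i x \<in> Hs i" for G
    unfolding chain_map_def
  proof (intro conjI allI ballI)
    fix i
    show "lin_on scale (V i) (V i) (\<lambda>x. G i (pp i x))"
      by (rule lin_imp_lin_on[OF lin_comp[OF pp(1) lG]]) (use GH pp_in HV in blast)
  next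
    fix i x assume x: "x \<in> V i"
    have "d i (G i (pp i x)) = 0" using dZ GH pp_in HZ by blast
    moreover have "pp (i + 1) (d i x) = 0" using pp_d[of x "i + 1"] x by simp
    moreover have "G (i + 1) 0 = 0" using P.linear_0[OF lG] .
    ultimately show "d i (G i (pp i x)) = G (i + 1) (pp (i + 1) (d i x))" by simp
  qed
  have ca: "chain_map scale V d \<alpha>" unfolding \<alpha>_def[abs_def] by (rule chainI[OF lA AH])
  have cb: "chain_map scale V d \<beta>" unfolding \<beta>_def[abs_def] by (rule chainI[OF lBf BH])
  define K where "K i x = hh i (\<phi> i x) + pp (i - 1) (\<phi> (i - 1) (hh i x))" for i x
  have Klin: "lin_on scale (V i) (V (i - 1)) (K i)" for i
  proof -
    have 1: "lin_on scale (V i) (V (i - 1)) (\<lambda>x. hh i (\<phi> i x))"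
      by (rule lin_on_comp[OF lphi lin_imp_lin_on[OF hh_lin hh_V]])
    have 2: "lin_on scale (V i) (V (i - 1)) (\<lambda>x. pp (i - 1) (\<phi> (i - 1) (hh i x)))"
      by (rule lin_on_comp[OF lin_imp_lin_on[OF hh_lin hh_V] lin_on_comp[OF lphi lin_imp_lin_on[OF pp(1)]]])
        (use pp_in HV in blast)
    show ?thesis unfolding K_def[abs_def] by (rule lin_on_add[OF 1 2 sV])
  qed
  have Keq: "\<phi> i x - (\<alpha> i (\<beta> i x) - \<beta> i (\<alpha> i x)) = d (i - 1) (K i x) + K (i + 1) (d i x)"
    if x: "x \<in> V i" for i x
  proof -
    have px: "pp i x \<in> Hs i" by (rule pp_in)
    have "\<alpha> i (\<beta> i x) - \<beta> i (\<alpha> i x) = A i (Bf i (pp i x)) - Bf i (A i (pp i x))"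
      unfolding \<alpha>_def \<beta>_def using pp_H BH[OF px] AH[OF px] by simp
    also have "\<dots> = pp i (\<phi> i (pp i x))" using ABeq[OF px] by simp
    finally have lhs: "\<alpha> i (\<beta> i x) - \<beta> i (\<alpha> i x) = pp i (\<phi> i (pp i x))" .
    have fx: "\<phi> i x \<in> V i" using lin_onD(1)[OF lphi x] .
    have h1: "d (i - 1) (hh i (\<phi> i x)) + hh (i + 1) (\<phi> (i + 1) (d i x)) = \<phi> i x - pp i (\<phi> i x)"
      using htpy[OF fx] cphi[OF x] by simp
    define a where "a = d (i - 1) (hh i x)"
    define b where "b = hh (i + 1) (d i x)"
    have "d (i - 1) (hh i x) \<in> V (i - 1 + 1)" by (rule d_in[OF hh_V])
    then have aV: "a \<in> V i" unfolding a_def by simp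
    have bV: "b \<in> V i" unfolding b_def using hh_V[of "i + 1"] by simp
    have xpx: "x - pp i x = a + b" using htpy[OF x] unfolding a_def b_def by simp
    have ppxV: "pp i x \<in> V i" using px HV by blast
    have "pp i (\<phi> i x) - pp i (\<phi> i (pp i x)) = pp i (\<phi> i x - \<phi> i (pp i x))"
      using P.linear_diff[OF pp(1)] by simp
    also have "\<phi> i x - \<phi> i (pp i x) = \<phi> i (x - pp i x)"
      using lin_on_diff[OF lphi sV x ppxV] by simp
    also have "\<dots> = \<phi> i a + \<phi> i b" unfolding xpx using lin_onD(2)[OF lphi aV bV] .
    also have "\<phi> i a = d (i - 1) (\<phi> (i - 1) (hh i x))"
    proof -
      have "d (i - 1) (\<phi> (i - 1) (hh i x)) = \<phi> (i - 1 + 1) (d (i - 1) (hh i x))" by (rule cphi[OF hh_V])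
      then show ?thesis unfolding a_def by simp
    qed
    also have "pp i (d (i - 1) (\<phi> (i - 1) (hh i x)) + \<phi> i b) = pp i (\<phi> i b)"
      using P.linear_add[OF pp(1)] pp_d lin_onD(1)[OF lphi hh_V] by simp
    finally have h2: "pp i (\<phi> i x) - pp i (\<phi> i (pp i x)) = pp i (\<phi> i b)" .
    have "d (i - 1) (K i x) = d (i - 1) (hh i (\<phi> i x))"
    proof -
      have "d (i - 1) (K i x) = d (i - 1) (hh i (\<phi> i x)) + d (i - 1) (pp (i - 1) (\<phi> (i - 1) (hh i x)))"
        unfolding K_def using lin_onD(2)[OF dlin'] hh_V pp_in HV by blast
      then show ?thesis using d_pp by simp
    qed
    moreover have "K (i + 1) (d i x) = hh (i + 1) (\<phi> (i + 1) (d i x)) + pp i (\<phi> i b)"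
      unfolding K_def b_def by simp
    ultimately have rhs: "d (i - 1) (K i x) + K (i + 1) (d i x) =
        (\<phi> i x - pp i (\<phi> i x)) + (pp i (\<phi> i x) - pp i (\<phi> i (pp i x)))"
      using h1 h2 by (simp add: algebra_simps)
    show ?thesis unfolding lhs rhs by simp
  qed
  have "chain_homotopic scale V d \<phi> (\<lambda>i x. \<alpha> i (\<beta> i x) - \<beta> i (\<alpha> i x))"
    unfolding chain_homotopic_def using Klin Keq by blast
  then show ?thesis using ca cb by blast
qed

end

theorem theorem3:
  fixes scale :: "'k::field \<Rightarrow> 'v::ab_group_add \<Rightarrow> 'v"
    and V :: "int \<Rightarrow> 'v set"
    and d \<phi> :: "int \<Rightarrow> 'v \<Rightarrow> 'v"
  assumes "vector_space scale"
    and "is_complex scale V d"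
    and "chain_map scale V d \<phi>"
  shows "(\<exists>\<alpha> \<beta>. chain_map scale V d \<alpha> \<and> chain_map scale V d \<beta> \<and>
            chain_homotopic scale V d \<phi> (\<lambda>i x. \<alpha> i (\<beta> i x) - \<beta> i (\<alpha> i x)))
         \<longleftrightarrow> (\<forall>i. cohom_trace scale V d \<phi> i = 0)"
  proof -
  interpret C: CX scale V d
    by (rule CX.intro[OF VS_I[OF assms(1)]]) (unfold_locales, rule assms(2))
  show ?thesis using C.a_to_b[OF assms(3)] C.b_to_a[OF assms(3)] by blast
qed

end
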